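(* Let $A\in\mathrm{Seq}_{r,t}$ and let $i$ be an index with $a_i\neq a_{i+1}$. Then there is a power series $W_i^{(A)}(u)\in\mathbb C[y_1,\dots,y_{i-1}][[u^{-1}]]$ such that $$e_i^{(A)}\frac{1}{u-y_i}e_i^{(A)}=\frac{W_i^{(A)}(u)}{u}e_i^{(A)}$$ in $\operatorname{End}(A)[[u^{-1}]]$. Moreover $W_i^{(A)}$ depends only on $(a_1,\dots,a_i)$: if $A,A'\in\mathrm{Seq}_{r,t}$ with $a_i\ne a_{i+1}$, $a'_i\neq a'_{i+1}$ and $a_j=a'_j$ for all $j\le i$, then $W_i^{(A)}=W_i^{(A')}$.
   Context: Let $r,t\in\mathbb N$. An $(r,t)$-sequence is a sequence $A=(a_1,\dots,a_{r+t})$ that is a permutation of $(1,\dots,1,-1,\dots,-1)$ ($r$ entries $1$, $t$ entries $-1$); $\mathrm{Seq}_{r,t}$ is the set of these, and the simple transpositions $\mathsf s_j=(j,j+1)$ of $S_{r+t}$ act on it by permuting entries. Fix complex numbers $\boldsymbol\omega=(\omega_k)_{k\in\mathbb N}$. The degenerate affine walled Brauer category $\underline{\mathrm{VB}}_{r,t}(\boldsymbol\omega)$ is the $\mathbb C$-linear category with object set $\mathrm{Seq}_{r,t}$ whose morphisms are generated by: endomorphisms $s_i^{(A)}$ of $A$ for $1\le i\le r+t-1$ with $a_i=a_{i+1}$; endomorphisms $e_i^{(A)}$ of $A$ for $1\le i\le r+t-1$ with $a_i\neq a_{i+1}$; endomorphisms $y_i^{(A)}$ of $A$ for $1\le i\le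 r+t$; and morphisms $\hat s_j^{(A)},\hat e_j^{(A)}:A\to\mathsf s_jA$ whenever $\mathsf s_jA\ne A$. Superscripts are usually omitted; composition $fg$ means $g$ first. A symbol $\dot s_i$ stands for $s_i$ or $\hat s_i$ and $\dot e_i$ for $e_i$ or $\hat e_i$; each relation is imposed for all objects and all choices of dotted symbols (possibly different on the two sides) for which both sides are defined morphisms with the same source and target. Relations: (1) $\dot s_i\dot s_i=1$; (2) $\dot s_i\dot s_j=\dot s_j\dot s_i$ for $|i-j|>1$, $\dot s_i\dot s_{i+1}\dot s_i=\dot s_{i+1}\dot s_i\dot s_{i+1}$, $\dot s_iy_j=y_j\dot s_i$ for $j\ne i,i+1$; (3) $(e_i^{(A)})^2=\omega_0e_i^{(A)}$; (4) $e_1^{(A)}y_1^ke_1^{(A)}=\omega_ke_1^{(A)}$ for all $k\in\mathbb N$ when $a_1=1,a_2=-1$; (5) $\dot s_i\dot e_j=\dot e_j\dot s_i$ and $\dot e_i\dot e_j=\dot e_j\dot e_i$ for $|i-j|>1$, $\dot e_iy_j=y_j\dot e_i$ for $j\neq i,i+1$, $y_iy_j=y_jy_i$; (6) $\hat s_i\dot e_i=\dot e_i=\dot e_i\hat s_i$, $\dot s_i\dot e_{i+1}\dot e_i=\dot s_{i+1}\dot e_i$, $\dot e_i\dot e_{i+1}\dot s_i=\dot e_i\dot s_{i+1}$, $\dot e_{i+1}\dot e_i\dot s_{i+1}=\dot e_{i+1}\dot s_i$, $\dot s_{i+1}\dot e_i\dot e_{i+1}=\dot s_i\dot e_{i+1}$,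 $\dot e_{i+1}\dot e_i\dot e_{i+1}=\dot e_{i+1}$, $\dot e_i\dot e_{i+1}\dot e_i=\dot e_i$; (7) $s_iy_i-y_{i+1}s_i=-1$, $s_iy_{i+1}-y_is_i=1$, $\hat s_iy_i-y_{i+1}\hat s_i=\hat e_i$, $\hat s_iy_{i+1}-y_i\hat s_i=-\hat e_i$; (8) $\dot e_i(y_i+y_{i+1})=0=(y_i+y_{i+1})\dot e_i$. Power series: $u$ is a formal variable; one works in $\operatorname{End}(A)[[u^{-1}]]$, with $\frac1{u-y}:=\sum_{k\ge0}y^ku^{-k-1}$. *)

theory Defs
  imports Complex_Main
begin

text \<open>Objects: (r,t)-sequences, as integer lists with entries 1 / -1; entry a_i is A ! (i-1).\<close>

definition Seq :: "nat \<Rightarrow> nat \<Rightarrow> int list set" where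
  "Seq r t = {A. length A = r + t \<and> set A \<subseteq> {1, -1} \<and> length (filter (\<lambda>x. x = 1) A) = r}"

text \<open>The action of the simple transposition s_j = (j, j+1) on a sequence (1-based j).\<close>
definition swp :: "nat \<Rightarrow> int list \<Rightarrow> int list" where
  "swp j A = A[j - 1 := A ! j, j := A ! (j - 1)]"

text \<open>The category is encoded by its
  path algebra (direct sum of all Hom spaces, composition of non-composable morphisms
  being zero), with the identities Idm A as orthogonal idempotents.
  Sg A i = s_i^(A), Eg A i = e_i^(A), Yg A i = y_i^(A),
  SHg A j = hat s_j^(A) : A -> s_j A, EHg A j = hat e_j^(A) : A -> s_j A.
  Comp f g means f g (g first).\<close>
datatype tm =
    Idm "int list"
  | Sg "int list" nat
  | Eg "int list" nat
  | Yg "int list" nat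
  | SHg "int list" nat
  | EHg "int list" nat
  | Comp tm tm
  | Add tm tm
  | Smul complex tm
  | Zer

fun gen_ok :: "nat \<Rightarrow> nat \<Rightarrow> tm \<Rightarrow> bool" where
  "gen_ok r t (Idm A) = (A \<in> Seq r t)"
| "gen_ok r t (Sg A i) = (A \<in> Seq r t \<and> 1 \<le> i \<and> i < r + t \<and> A ! (i - 1) = A ! i)"
| "gen_ok r t (Eg A i) = (A \<in> Seq r t \<and> 1 \<le> i \<and> i < r + t \<and> A ! (i - 1) \<noteq> A ! i)"
| "gen_ok r t (Yg A i) = (A \<in> Seq r t \<and> 1 \<le> i \<and> i \<le> r + t)"
| "gen_ok r t (SHg A i) = (A \<in> Seq r t \<and> 1 \<le> i \<and> i < r + t \<and> swp i A \<noteq> A)"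
| "gen_ok r t (EHg A i) = (A \<in> Seq r t \<and> 1 \<le> i \<and> i < r + t \<and> swp i A \<noteq> A)"
| "gen_ok r t _ = True"

text \<open>Letters for monomial relations: LS i = dotted s_i, LSH i = hat s_i,
  LE i = dotted e_i, LY j = y_j.\<close>
datatype letter = LS nat | LSH nat | LE nat | LY nat

fun step :: "nat \<Rightarrow> letter \<Rightarrow> int list \<Rightarrow> int list \<Rightarrow> tm \<Rightarrow> bool" where
  "step n (LS i) X Z g = (1 \<le> i \<and> i < n \<and> Z = swp i X \<and>
      g = (if X ! (i - 1) = X ! i then Sg X i else SHg X i))"
| "step n (LSH i) X Z g = (1 \<le> i \<and> i < n \<and> X ! (i - 1) \<noteq> X ! i \<and> Z = swp i X \<and> g = SHg X i)"
| "step n (LE i) X Z g = (1 \<le> i \<and> i < n \<and> X ! (i - 1) \<noteq> X ! i \<and>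
      ((Z = X \<and> g = Eg X i) \<or> (Z = swp i X \<and> g = EHg X i)))"
| "step n (LY j) X Z g = (1 \<le> j \<and> j \<le> n \<and> Z = X \<and> g = Yg X j)"

text \<open>wmor r t w X Z m: the word w (written as composition l1 l2 ... ln, ln applied first)
  is realised as a defined morphism m from X to Z (for some choice of dotted symbols).\<close>
inductive wmor :: "nat \<Rightarrow> nat \<Rightarrow> letter list \<Rightarrow> int list \<Rightarrow> int list \<Rightarrow> tm \<Rightarrow> bool"
  for r t where
  wnil: "X \<in> Seq r t \<Longrightarrow> wmor r t [] X X (Idm X)"
| wcons: "wmor r t w X Y m \<Longrightarrow> step (r + t) l Y Z g \<Longrightarrow> wmor r t (l # w) X Z (Comp g m)"

definition monrel :: "nat \<Rightarrow> nat \<Rightarrow> letter list \<Rightarrow> letter list \<Rightarrow> tm \<Rightarrow> tm \<Rightarrow> bool" where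
  "monrel r t w1 w2 m1 m2 = (\<exists>X Z. wmor r t w1 X Z m1 \<and> wmor r t w2 X Z m2)"

text \<open>The monomial relations (1),(2),(5),(6), as pairs of words (all dotted choices).\<close>
inductive monpair :: "letter list \<Rightarrow> letter list \<Rightarrow> bool" where
  r1:  "monpair [LS i, LS i] []"
| r2a: "i + 1 < j \<or> j + 1 < i \<Longrightarrow> monpair [LS i, LS j] [LS j, LS i]"
| r2b: "monpair [LS i, LS (i + 1), LS i] [LS (i + 1), LS i, LS (i + 1)]"
| r2c: "j \<noteq> i \<Longrightarrow> j \<noteq> i + 1 \<Longrightarrow> monpair [LS i, LY j] [LY j, LS i]"
| r5a: "i + 1 < j \<or> j + 1 < i \<Longrightarrow> monpair [LS i, LE j] [LE j, LS i]"
| r5b: "i + 1 < j \<or> j + 1 < i \<Longrightarrow> monpair [LE i, LE j] [LE j, LE i]"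
| r5c: "j \<noteq> i \<Longrightarrow> j \<noteq> i + 1 \<Longrightarrow> monpair [LE i, LY j] [LY j, LE i]"
| r5d: "monpair [LY i, LY j] [LY j, LY i]"
| r6a: "monpair [LSH i, LE i] [LE i]"
| r6b: "monpair [LE i] [LE i, LSH i]"
| r6c: "monpair [LS i, LE (i + 1), LE i] [LS (i + 1), LE i]"
| r6d: "monpair [LE i, LE (i + 1), LS i] [LE i, LS (i + 1)]"
| r6e: "monpair [LE (i + 1), LE i, LS (i + 1)] [LE (i + 1), LS i]"
| r6f: "monpair [LS (i + 1), LE i, LE (i + 1)] [LS i, LE (i + 1)]"
| r6g: "monpair [LE (i + 1), LE i, LE (i + 1)] [LE (i + 1)]"
| r6h: "monpair [LE i, LE (i + 1), LE i] [LE i]"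

fun ypow :: "int list \<Rightarrow> nat \<Rightarrow> nat \<Rightarrow> tm" where
  "ypow A i 0 = Idm A"
| "ypow A i (Suc k) = Comp (Yg A i) (ypow A i k)"

inductive veq :: "nat \<Rightarrow> nat \<Rightarrow> (nat \<Rightarrow> complex) \<Rightarrow> tm \<Rightarrow> tm \<Rightarrow> bool"
  for r t \<omega> where
  refl: "veq r t \<omega> x x"
| sym: "veq r t \<omega> x y \<Longrightarrow> veq r t \<omega> y x"
| trans: "veq r t \<omega> x y \<Longrightarrow> veq r t \<omega> y z \<Longrightarrow> veq r t \<omega> x z"
| cong_comp: "veq r t \<omega> x x' \<Longrightarrow> veq r t \<omega> y y' \<Longrightarrow> veq r t \<omega> (Comp x y) (Comp x' y')"
| cong_add: "veq r t \<omega> x x' \<Longrightarrow> veq r t \<omega> y y' \<Longrightarrow> veq r t \<omega> (Add x y) (Add x' y')"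
| cong_smul: "veq r t \<omega> x x' \<Longrightarrow> veq r t \<omega> (Smul c x) (Smul c x')"
| add_assoc: "veq r t \<omega> (Add (Add x y) z) (Add x (Add y z))"
| add_comm: "veq r t \<omega> (Add x y) (Add y x)"
| add_zero: "veq r t \<omega> (Add x Zer) x"
| add_neg: "veq r t \<omega> (Add x (Smul (-1) x)) Zer"
| smul_add: "veq r t \<omega> (Smul c (Add x y)) (Add (Smul c x) (Smul c y))"
| add_smul: "veq r t \<omega> (Smul (c + d) x) (Add (Smul c x) (Smul d x))"
| smul_smul: "veq r t \<omega> (Smul c (Smul d x)) (Smul (c * d) x)"
| smul_one: "veq r t \<omega> (Smul 1 x) x"
| comp_assoc: "veq r t \<omega> (Comp (Comp x y) z) (Comp x (Comp y z))"
| comp_addR: "veq r t \<omega> (Comp x (Add y z)) (Add (Comp x y) (Comp x z))"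
| comp_addL: "veq r t \<omega> (Comp (Add x y) z) (Add (Comp x z) (Comp y z))"
| comp_smulR: "veq r t \<omega> (Comp x (Smul c y)) (Smul c (Comp x y))"
| comp_smulL: "veq r t \<omega> (Comp (Smul c x) y) (Smul c (Comp x y))"
| bad_gen: "\<not> gen_ok r t g \<Longrightarrow> veq r t \<omega> g Zer"
| id_idem: "veq r t \<omega> (Comp (Idm A) (Idm A)) (Idm A)"
| id_orth: "A \<noteq> B \<Longrightarrow> veq r t \<omega> (Comp (Idm A) (Idm B)) Zer"
| src_S: "veq r t \<omega> (Sg A i) (Comp (Idm A) (Comp (Sg A i) (Idm A)))"
| src_E: "veq r t \<omega> (Eg A i) (Comp (Idm A) (Comp (Eg A i) (Idm A)))"
| src_Y: "veq r t \<omega> (Yg A i) (Comp (Idm A) (Comp (Yg A i) (Idm A)))"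
| src_SH: "veq r t \<omega> (SHg A i) (Comp (Idm (swp i A)) (Comp (SHg A i) (Idm A)))"
| src_EH: "veq r t \<omega> (EHg A i) (Comp (Idm (swp i A)) (Comp (EHg A i) (Idm A)))"
| mon: "monpair w1 w2 \<Longrightarrow> monrel r t w1 w2 m1 m2 \<Longrightarrow> veq r t \<omega> m1 m2"
| rel3: "gen_ok r t (Eg A i) \<Longrightarrow> veq r t \<omega> (Comp (Eg A i) (Eg A i)) (Smul (\<omega> 0) (Eg A i))"
| rel4: "A \<in> Seq r t \<Longrightarrow> 2 \<le> r + t \<Longrightarrow> A ! 0 = 1 \<Longrightarrow> A ! 1 = -1 \<Longrightarrow>
     veq r t \<omega> (Comp (Eg A 1) (Comp (ypow A 1 k) (Eg A 1))) (Smul (\<omega> k) (Eg A 1))"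
| rel7a: "gen_ok r t (Sg A i) \<Longrightarrow>
     veq r t \<omega> (Add (Comp (Sg A i) (Yg A i)) (Smul (-1) (Comp (Yg A (i + 1)) (Sg A i))))
               (Smul (-1) (Idm A))"
| rel7b: "gen_ok r t (Sg A i) \<Longrightarrow>
     veq r t \<omega> (Add (Comp (Sg A i) (Yg A (i + 1))) (Smul (-1) (Comp (Yg A i) (Sg A i))))
               (Idm A)"
| rel7c: "gen_ok r t (SHg A i) \<Longrightarrow>
     veq r t \<omega> (Add (Comp (SHg A i) (Yg A i)) (Smul (-1) (Comp (Yg (swp i A) (i + 1)) (SHg A i))))
               (EHg A i)"
| rel7d: "gen_ok r t (SHg A i) \<Longrightarrow>
     veq r t \<omega> (Add (Comp (SHg A i) (Yg A (i + 1))) (Smul (-1) (Comp (Yg (swp i A) i) (SHg A i))))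
               (Smul (-1) (EHg A i))"
| rel8a: "gen_ok r t (Eg A i) \<Longrightarrow> veq r t \<omega> (Comp (Eg A i) (Add (Yg A i) (Yg A (i + 1)))) Zer"
| rel8b: "gen_ok r t (Eg A i) \<Longrightarrow> veq r t \<omega> (Comp (Add (Yg A i) (Yg A (i + 1))) (Eg A i)) Zer"
| rel8c: "gen_ok r t (EHg A i) \<Longrightarrow> veq r t \<omega> (Comp (EHg A i) (Add (Yg A i) (Yg A (i + 1)))) Zer"
| rel8d: "gen_ok r t (EHg A i) \<Longrightarrow>
     veq r t \<omega> (Comp (Add (Yg (swp i A) i) (Yg (swp i A) (i + 1))) (EHg A i)) Zer"

text \<open>Polynomials in y_1, y_2, ...: a list of (coefficient, exponent list), where the
  exponent list [k1, k2, ...] stands for y_1^k1 y_2^k2 ...  Evaluation as endomorphism of A.\<close>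
fun monoterm :: "int list \<Rightarrow> nat \<Rightarrow> nat list \<Rightarrow> tm" where
  "monoterm A j [] = Idm A"
| "monoterm A j (k # ks) = Comp (ypow A j k) (monoterm A (Suc j) ks)"

fun peval :: "int list \<Rightarrow> (complex \<times> nat list) list \<Rightarrow> tm" where
  "peval A [] = Zer"
| "peval A ((c, e) # ps) = Add (Smul c (monoterm A 1 e)) (peval A ps)"

end

theory Submission
  imports Defs "HOL-Library.Multiset"
begin

type_synonym prm = "nat \<times> nat \<times> (nat \<Rightarrow> complex)"

definition mrel :: "(prm \<Rightarrow> tm) \<Rightarrow> (prm \<Rightarrow> tm) \<Rightarrow> bool" where
  "mrel f g = (\<forall>r t \<omega>. veq r t \<omega> (f (r,t,\<omega>)) (g (r,t,\<omega>)))"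

lemma mrel_equivp: "equivp mrel"
  unfolding mrel_def
  by (rule equivpI; unfold reflp_def symp_def transp_def; meson veq.refl veq.sym veq.trans)

quotient_type mor = "prm \<Rightarrow> tm" / mrel
  by (rule mrel_equivp)

instantiation mor :: ring
begin
lift_definition zero_mor :: mor is "\<lambda>p. Zer" .
lift_definition plus_mor :: "mor \<Rightarrow> mor \<Rightarrow> mor" is "\<lambda>f g p. Add (f p) (g p)"
  by (auto simp: mrel_def intro: veq.cong_add)
lift_definition uminus_mor :: "mor \<Rightarrow> mor" is "\<lambda>f p. Smul (-1) (f p)"
  by (auto simp: mrel_def intro: veq.cong_smul)
lift_definition minus_mor :: "mor \<Rightarrow> mor \<Rightarrow> mor" is "\<lambda>f g p. Add (f p) (Smul (-1) (g p))"
  by (auto simp: mrel_def intro!: veq.cong_add veq.cong_smul)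
lift_definition times_mor :: "mor \<Rightarrow> mor \<Rightarrow> mor" is "\<lambda>f g p. Comp (f p) (g p)"
  by (auto simp: mrel_def intro: veq.cong_comp)
instance
proof
  fix a b c :: mor
  show "a + b + c = a + (b + c)" by transfer (auto simp: mrel_def intro: veq.add_assoc)
  show "a + b = b + a" by transfer (auto simp: mrel_def intro: veq.add_comm)
  show "0 + a = a" by transfer (auto simp: mrel_def intro: veq.trans[OF veq.add_comm veq.add_zero])
  show "- a + a = 0" by transfer (auto simp: mrel_def intro: veq.trans[OF veq.add_comm veq.add_neg])
  show "a - b = a + - b" by transfer (auto simp: mrel_def intro: veq.refl)
  show "a * b * c = a * (b * c)" by transfer (auto simp: mrel_def intro: veq.comp_assoc)
  show "(a + b) * c = a * c + b * c" by transfer (auto simp: mrel_def intro: veq.comp_addL)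
  show "a * (b + c) = a * b + a * c" by transfer (auto simp: mrel_def intro: veq.comp_addR)
qed
end

lift_definition csm :: "complex \<Rightarrow> mor \<Rightarrow> mor" is "\<lambda>c f p. Smul c (f p)"
  by (auto simp: mrel_def intro: veq.cong_smul)

lemma csm_add: "csm c (a + b) = csm c a + csm c b"
  by transfer (auto simp: mrel_def intro: veq.smul_add)
lemma csm_add2: "csm (c + d) a = csm c a + csm d a"
  by transfer (auto simp: mrel_def intro: veq.add_smul)
lemma csm_csm[simp]: "csm c (csm d a) = csm (c * d) a"
  by transfer (auto simp: mrel_def intro: veq.smul_smul)
lemma csm_one[simp]: "csm 1 a = a"
  by transfer (auto simp: mrel_def intro: veq.smul_one)
lemma csm_multL: "csm c a * b = csm c (a * b)"
  by transfer (auto simp: mrel_def intro: veq.comp_smulL)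
lemma csm_multR: "a * csm c b = csm c (a * b)"
  by transfer (auto simp: mrel_def intro: veq.comp_smulR)
lemma csm_m1: "csm (-1) a = - a"
  by transfer (auto simp: mrel_def intro: veq.refl)
lemma csm_zero[simp]: "csm 0 a = 0"
proof -
  have "csm 0 a = csm 0 a + csm 0 a" using csm_add2[of 0 0 a] by simp
  then show ?thesis by (metis add_cancel_left_right)
qed
lemma csm_zero2[simp]: "csm c 0 = 0"
proof -
  have "csm c 0 = csm c 0 + csm c 0" using csm_add[of c 0 0] by simp
  then show ?thesis by (metis add_cancel_left_right)
qed
lemma csm_minus: "csm c (- a) = - csm c a"
  by (simp only: csm_m1[symmetric] csm_csm) simp
lemma csm_diff: "csm c (a - b) = csm c a - csm c b"
  by (simp only: diff_conv_add_uminus csm_add csm_minus)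
lemma csm_uminus: "csm (- c) a = - csm c a"
  by (simp only: csm_m1[symmetric] csm_csm) simp
lemma csm_diff2: "csm (c - d) a = csm c a - csm d a"
  using csm_add2[of c "-d" a] by (simp add: csm_uminus)

definition E :: "nat \<Rightarrow> nat \<Rightarrow> (nat \<Rightarrow> complex) \<Rightarrow> tm \<Rightarrow> mor" where
  "E r t \<omega> x = abs_mor (\<lambda>p. if p = (r,t,\<omega>) then x else Zer)"

lemma veq_trans' [trans]: "veq r t \<omega> x y \<Longrightarrow> veq r t \<omega> y z \<Longrightarrow> veq r t \<omega> x z"
  by (rule veq.trans)

lemma veq_zero_self: "veq r t \<omega> x (Add x x) \<Longrightarrow> veq r t \<omega> x Zer"
proof -
  assume h: "veq r t \<omega> x (Add x x)"
  have "veq r t \<omega> Zer (Add x (Smul (-1) x))" by (rule veq.sym, rule veq.add_neg)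
  also have "veq r t \<omega> (Add x (Smul (-1) x)) (Add (Add x x) (Smul (-1) x))"
    by (rule veq.cong_add[OF h veq.refl])
  also have "veq r t \<omega> (Add (Add x x) (Smul (-1) x)) (Add x (Add x (Smul (-1) x)))"
    by (rule veq.add_assoc)
  also have "veq r t \<omega> (Add x (Add x (Smul (-1) x))) (Add x Zer)"
    by (rule veq.cong_add[OF veq.refl veq.add_neg])
  also have "veq r t \<omega> (Add x Zer) x" by (rule veq.add_zero)
  finally show ?thesis by (rule veq.sym)
qed

lemma comp_zer: "veq r t \<omega> (Comp Zer Zer) Zer"
proof (rule veq_zero_self)
  have "veq r t \<omega> (Comp Zer Zer) (Comp Zer (Add Zer Zer))"
    by (rule veq.cong_comp[OF veq.refl veq.sym[OF veq.add_zero]])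
  also have "veq r t \<omega> (Comp Zer (Add Zer Zer)) (Add (Comp Zer Zer) (Comp Zer Zer))"
    by (rule veq.comp_addR)
  finally show "veq r t \<omega> (Comp Zer Zer) (Add (Comp Zer Zer) (Comp Zer Zer))" .
qed

lemma smul_zer: "veq r t \<omega> (Smul c Zer) Zer"
proof (rule veq_zero_self)
  have "veq r t \<omega> (Smul c Zer) (Smul c (Add Zer Zer))"
    by (rule veq.cong_smul[OF veq.sym[OF veq.add_zero]])
  also have "veq r t \<omega> (Smul c (Add Zer Zer)) (Add (Smul c Zer) (Smul c Zer))"
    by (rule veq.smul_add)
  finally show "veq r t \<omega> (Smul c Zer) (Add (Smul c Zer) (Smul c Zer))" .
qed

lemma E_eq: "E r t \<omega> x = E r t \<omega> y \<longleftrightarrow> veq r t \<omega> x y"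
  unfolding E_def
  apply (subst mor.abs_eq_iff)
  by (auto simp: mrel_def intro: veq.refl)

lemma mrel_refl: "mrel f f" by (simp add: mrel_def veq.refl)

lemma E_comp: "E r t \<omega> (Comp x y) = E r t \<omega> x * E r t \<omega> y"
  unfolding E_def
  apply (subst times_mor.abs_eq)
  apply (subst mor.abs_eq_iff)
  by (auto simp: mrel_def intro: veq.refl veq.sym[OF comp_zer])

lemma E_add: "E r t \<omega> (Add x y) = E r t \<omega> x + E r t \<omega> y"
  unfolding E_def
  apply (subst plus_mor.abs_eq)
  apply (subst mor.abs_eq_iff)
  by (auto simp: mrel_def intro: veq.refl veq.sym[OF veq.add_zero])

lemma E_smul: "E r t \<omega> (Smul c x) = csm c (E r t \<omega> x)"
  unfolding E_def
  apply (subst csm.abs_eq)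
  apply (subst mor.abs_eq_iff)
  by (auto simp: mrel_def intro: veq.refl veq.sym[OF smul_zer])

lemma E_zer: "E r t \<omega> Zer = 0"
  unfolding E_def zero_mor_def
  apply (subst mor.abs_eq_iff)
  by (auto simp: mrel_def intro: veq.refl)

section \<open>Sequences\<close>

lemma seq_len: "A \<in> Seq r t \<Longrightarrow> length A = r + t"
  by (simp add: Seq_def)

lemma seq_pm: "A \<in> Seq r t \<Longrightarrow> j < r + t \<Longrightarrow> A ! j = 1 \<or> A ! j = -1"
proof -
  assume a: "A \<in> Seq r t" "j < r + t"
  then have "A ! j \<in> set A" by (simp add: Seq_def)
  then show ?thesis using a(1) unfolding Seq_def by blast
qed

lemma swp_len[simp]: "length (swp j A) = length A"
  by (simp add: swp_def)

lemma swp_nth: "1 \<le> j \<Longrightarrow> j < length A \<Longrightarrow>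
   swp j A ! l = (if l = j - 1 then A ! j else if l = j then A ! (j - 1) else A ! l)"
  by (auto simp: swp_def nth_list_update)

lemma swp_nth1[simp]: "1 \<le> j \<Longrightarrow> j < length A \<Longrightarrow> swp j A ! (j - 1) = A ! j"
  by (simp add: swp_nth)
lemma swp_nth2[simp]: "1 \<le> j \<Longrightarrow> j < length A \<Longrightarrow> swp j A ! j = A ! (j - 1)"
  by (simp add: swp_nth)
lemma swp_nth3[simp]: "1 \<le> j \<Longrightarrow> j < length A \<Longrightarrow> l \<noteq> j - 1 \<Longrightarrow> l \<noteq> j \<Longrightarrow> swp j A ! l = A ! l"
  by (simp add: swp_nth)

lemma swp_swp[simp]: "1 \<le> j \<Longrightarrow> j < length A \<Longrightarrow> swp j (swp j A) = A"
  by (rule nth_equalityI) (auto simp: swp_nth)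

lemma swp_id: "A ! (j - 1) = A ! j \<Longrightarrow> swp j A = A"
  unfolding swp_def by (metis list_update_id)

lemma swp_neq: "1 \<le> j \<Longrightarrow> j < length A \<Longrightarrow> A ! (j - 1) \<noteq> A ! j \<Longrightarrow> swp j A \<noteq> A"
  by (metis swp_nth1)

lemma swp_seq: "A \<in> Seq r t \<Longrightarrow> 1 \<le> j \<Longrightarrow> j < r + t \<Longrightarrow> swp j A \<in> Seq r t"
proof -
  assume a: "A \<in> Seq r t" "1 \<le> j" "j < r + t"
  have m: "mset (swp j A) = mset A"
    unfolding swp_def using a by (simp add: seq_len mset_swap)
  have "set (swp j A) = set A" by (metis m set_mset_mset)
  moreover have "length (filter (\<lambda>x. x = 1) (swp j A)) = length (filter (\<lambda>x. x = 1) A)"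
    by (metis m mset_filter size_mset)
  ultimately show ?thesis using a by (simp add: Seq_def)
qed

lemma take_swp: "1 \<le> i \<Longrightarrow> i < length A \<Longrightarrow> take i (swp i A) = take (i - 1) A @ [A ! i]"
proof (rule nth_equalityI)
  assume a: "1 \<le> i" "i < length A"
  show "length (take i (swp i A)) = length (take (i - 1) A @ [A ! i])" using a by simp
  fix l assume "l < length (take i (swp i A))"
  then show "take i (swp i A) ! l = (take (i - 1) A @ [A ! i]) ! l"
    using a by (auto simp: swp_nth nth_append)
qed

locale vb =
  fixes r t :: nat and \<omega> :: "nat \<Rightarrow> complex"
begin

abbreviation "N \<equiv> r + t"
abbreviation "S \<equiv> Seq r t"
abbreviation ev :: "tm \<Rightarrow> mor" where "ev x \<equiv> E r t \<omega> x"
abbreviation "I X \<equiv> ev (Idm X)"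
abbreviation "eg X i \<equiv> ev (Eg X i)"
abbreviation "sg X i \<equiv> ev (Sg X i)"
abbreviation "yg X i \<equiv> ev (Yg X i)"
abbreviation "shg X i \<equiv> ev (SHg X i)"
abbreviation "ehg X i \<equiv> ev (EHg X i)"
abbreviation "yp X i k \<equiv> ev (ypow X i k)"

lemmas Esimps = E_comp E_add E_smul E_zer

lemma ev_eq: "veq r t \<omega> x y \<Longrightarrow> ev x = ev y"
  by (simp add: E_eq)

lemma I_idem[simp]: "I X * I X = I X"
  by (subst E_comp[symmetric], rule ev_eq, rule veq.id_idem)
lemma I_orth: "X \<noteq> Y \<Longrightarrow> I X * I Y = 0"
  by (subst E_comp[symmetric], subst E_zer[symmetric], rule ev_eq, erule veq.id_orth)
lemma I_idem'[simp]: "I X * (I X * a) = I X * a"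
  by (simp add: mult.assoc[symmetric])

lemma I_two:
  assumes "g = I Y * g * I X"
  shows "I Y * g = g" "g * I X = g"
proof -
  have "I Y * g = I Y * (I Y * g * I X)" by (rule arg_cong[OF assms])
  also have "\<dots> = I Y * g * I X" by (simp add: mult.assoc[symmetric])
  also have "\<dots> = g" by (rule assms[symmetric])
  finally show "I Y * g = g" .
  have "g * I X = (I Y * g * I X) * I X" by (rule arg_cong[OF assms])
  also have "\<dots> = I Y * g * I X" by (simp add: mult.assoc)
  also have "\<dots> = g" by (rule assms[symmetric])
  finally show "g * I X = g" .
qed

lemma src_S: "sg X i = I X * sg X i * I X"
  using ev_eq[OF veq.src_S] by (simp add: E_comp mult.assoc)
lemma src_E: "eg X i = I X * eg X i * I X"
  using ev_eq[OF veq.src_E] by (simp add: E_comp mult.assoc)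
lemma src_Y: "yg X i = I X * yg X i * I X"
  using ev_eq[OF veq.src_Y] by (simp add: E_comp mult.assoc)
lemma src_SH: "shg X i = I (swp i X) * shg X i * I X"
  using ev_eq[OF veq.src_SH] by (simp add: E_comp mult.assoc)
lemma src_EH: "ehg X i = I (swp i X) * ehg X i * I X"
  using ev_eq[OF veq.src_EH] by (simp add: E_comp mult.assoc)

lemmas idL[simp] = I_two(1)[OF src_S] I_two(1)[OF src_E] I_two(1)[OF src_Y] I_two(1)[OF src_SH] I_two(1)[OF src_EH]
lemmas idR[simp] = I_two(2)[OF src_S] I_two(2)[OF src_E] I_two(2)[OF src_Y] I_two(2)[OF src_SH] I_two(2)[OF src_EH]

lemma idL'[simp]:
  "I X * (sg X i * a) = sg X i * a" "I X * (eg X i * a) = eg X i * a" "I X * (yg X i * a) = yg X i * a"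
  "I (swp i X) * (shg X i * a) = shg X i * a" "I (swp i X) * (ehg X i * a) = ehg X i * a"
  by (simp_all add: mult.assoc[symmetric])

lemma idR'[simp]:
  "a * sg X i * I X = a * sg X i" "a * eg X i * I X = a * eg X i" "a * yg X i * I X = a * yg X i"
  "a * shg X i * I X = a * shg X i" "a * ehg X i * I X = a * ehg X i"
  by (simp_all add: mult.assoc)

lemma bad: "\<not> gen_ok r t g \<Longrightarrow> ev g = 0"
  by (subst E_zer[symmetric], rule ev_eq, erule veq.bad_gen)

section \<open>Words\<close>

lemma step_id: "step N l X Y g \<Longrightarrow> ev g * I X = ev g \<and> I Y * ev g = ev g"
  by (cases l) (auto split: if_splits simp: swp_id)

lemma mon_E: "monpair w1 w2 \<Longrightarrow> wmor r t w1 X Z m1 \<Longrightarrow> wmor r t w2 X Z m2 \<Longrightarrow> ev m1 = ev m2"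
  by (rule ev_eq, rule veq.mon, assumption, auto simp: monrel_def)

lemma w1: "X \<in> S \<Longrightarrow> step N l1 X Y g1 \<Longrightarrow> wmor r t [l1] X Y (Comp g1 (Idm X))"
  by (rule wmor.wcons[OF wmor.wnil])
lemma w2: "X \<in> S \<Longrightarrow> step N l1 X Y g1 \<Longrightarrow> step N l2 Y Z g2 \<Longrightarrow>
   wmor r t [l2, l1] X Z (Comp g2 (Comp g1 (Idm X)))"
  by (rule wmor.wcons[OF w1])
lemma w3: "X \<in> S \<Longrightarrow> step N l1 X Y g1 \<Longrightarrow> step N l2 Y Z g2 \<Longrightarrow> step N l3 Z U g3 \<Longrightarrow>
   wmor r t [l3, l2, l1] X U (Comp g3 (Comp g2 (Comp g1 (Idm X))))"
  by (rule wmor.wcons[OF w2])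

lemma ev1: "step N l1 X Y g1 \<Longrightarrow> ev (Comp g1 (Idm X)) = ev g1"
  by (drule step_id) (simp add: E_comp)
lemma ev2: "step N l1 X Y g1 \<Longrightarrow> ev (Comp g2 (Comp g1 (Idm X))) = ev g2 * ev g1"
  by (drule step_id) (simp add: E_comp)
lemma ev3: "step N l1 X Y g1 \<Longrightarrow> ev (Comp g3 (Comp g2 (Comp g1 (Idm X)))) = ev g3 * ev g2 * ev g1"
  by (drule step_id) (simp add: E_comp mult.assoc)

end

context vb begin

lemmas ss = seq_len swp_nth swp_id swp_seq

lemma hat_inv:
  assumes A: "A \<in> S" "1 \<le> i" "i < N" "A ! (i - 1) \<noteq> A ! i"
  shows "shg (swp i A) i * shg A i = I A"
proof -
  have "ev (Comp (SHg (swp i A) i) (Comp (SHg A i) (Idm A))) = ev (Idm A)"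
    by (rule mon_E[OF monpair.r1 w2[where Y="swp i A"] wmor.wnil]) (use A in \<open>auto simp: ss\<close>)
  then show ?thesis by (simp add: E_comp)
qed

lemma s_inv:
  assumes A: "A \<in> S" "1 \<le> i" "i < N" "A ! (i - 1) = A ! i"
  shows "sg A i * sg A i = I A"
proof -
  have "ev (Comp (Sg A i) (Comp (Sg A i) (Idm A))) = ev (Idm A)"
    by (rule mon_E[OF monpair.r1 w2[where Y="A"] wmor.wnil]) (use A in \<open>auto simp: ss\<close>)
  then show ?thesis by (simp add: E_comp)
qed

lemma F2:
  assumes A: "A \<in> S" "1 \<le> i" "i < N" "A ! (i - 1) \<noteq> A ! i"
  shows "shg A i * eg A i = ehg A i"
proof -
  have "ev (Comp (SHg A i) (Comp (Eg A i) (Idm A))) = ev (Comp (EHg A i) (Idm A))"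
    by (rule mon_E[OF monpair.r6a w2[where Y="A"] w1]) (use A in \<open>auto simp: ss\<close>)
  then show ?thesis by (simp add: E_comp)
qed

lemma F2':
  assumes A: "A \<in> S" "1 \<le> i" "i < N" "A ! (i - 1) \<noteq> A ! i"
  shows "shg (swp i A) i * ehg A i = eg A i"
proof -
  have "ev (Comp (SHg (swp i A) i) (Comp (EHg A i) (Idm A))) = ev (Comp (Eg A i) (Idm A))"
    by (rule mon_E[OF monpair.r6a w2[where Y="swp i A"] w1]) (use A in \<open>auto simp: ss\<close>)
  then show ?thesis by (simp add: E_comp)
qed

lemma F3:
  assumes A: "A \<in> S" "1 \<le> i" "i < N" "A ! (i - 1) \<noteq> A ! i"
  shows "eg (swp i A) i * shg A i = ehg A i"
proof -
  have "ev (Comp (EHg A i) (Idm A)) = ev (Comp (Eg (swp i A) i) (Comp (SHg A i) (Idm A)))"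
    by (rule mon_E[OF monpair.r6b w1 w2[where Y="swp i A"]]) (use A in \<open>auto simp: ss\<close>)
  then show ?thesis by (simp add: E_comp)
qed

lemma F3':
  assumes A: "A \<in> S" "1 \<le> i" "i < N" "A ! (i - 1) \<noteq> A ! i"
  shows "ehg (swp i A) i * shg A i = eg A i"
proof -
  have "ev (Comp (Eg A i) (Idm A)) = ev (Comp (EHg (swp i A) i) (Comp (SHg A i) (Idm A)))"
    by (rule mon_E[OF monpair.r6b w1 w2[where Y="swp i A"]]) (use A in \<open>auto simp: ss\<close>)
  then show ?thesis by (simp add: E_comp)
qed

lemma rel7c:
  assumes A: "A \<in> S" "1 \<le> i" "i < N" "A ! (i - 1) \<noteq> A ! i"
  shows "shg A i * yg A i = yg (swp i A) (i + 1) * shg A i + ehg A i"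
proof -
  have "gen_ok r t (SHg A i)" using A swp_neq[of i A] by (auto simp: ss)
  from ev_eq[OF veq.rel7c[OF this, of \<omega>]]
  show ?thesis by (simp add: Esimps csm_m1 algebra_simps)
qed

lemma rel7d:
  assumes A: "A \<in> S" "1 \<le> i" "i < N" "A ! (i - 1) \<noteq> A ! i"
  shows "shg A i * yg A (i + 1) = yg (swp i A) i * shg A i - ehg A i"
proof -
  have "gen_ok r t (SHg A i)" using A swp_neq[of i A] by (auto simp: ss)
  from ev_eq[OF veq.rel7d[OF this, of \<omega>]]
  show ?thesis by (simp add: Esimps csm_m1 algebra_simps)
qed

lemma rel7a:
  assumes A: "A \<in> S" "1 \<le> i" "i < N" "A ! (i - 1) = A ! i"
  shows "sg A i * yg A i = yg A (i + 1) * sg A i - I A"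
proof -
  have "gen_ok r t (Sg A i)" using A by (auto simp: ss)
  from ev_eq[OF veq.rel7a[OF this, of \<omega>]]
  show ?thesis by (simp add: Esimps csm_m1 algebra_simps)
qed

lemma rel7b:
  assumes A: "A \<in> S" "1 \<le> i" "i < N" "A ! (i - 1) = A ! i"
  shows "sg A i * yg A (i + 1) = yg A i * sg A i + I A"
proof -
  have "gen_ok r t (Sg A i)" using A by (auto simp: ss)
  from ev_eq[OF veq.rel7b[OF this, of \<omega>]]
  show ?thesis by (simp add: Esimps csm_m1 algebra_simps)
qed

lemma rel8a:
  assumes A: "A \<in> S" "1 \<le> i" "i < N" "A ! (i - 1) \<noteq> A ! i"
  shows "eg A i * yg A i = - (eg A i * yg A (i + 1))"
proof -
  have "gen_ok r t (Eg A i)" using A by (auto simp: ss)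
  from ev_eq[OF veq.rel8a[OF this, of \<omega>]]
  show ?thesis by (simp add: Esimps algebra_simps add_eq_0_iff)
qed

lemma rel8b:
  assumes A: "A \<in> S" "1 \<le> i" "i < N" "A ! (i - 1) \<noteq> A ! i"
  shows "yg A i * eg A i = - (yg A (i + 1) * eg A i)"
proof -
  have "gen_ok r t (Eg A i)" using A by (auto simp: ss)
  from ev_eq[OF veq.rel8b[OF this, of \<omega>]]
  show ?thesis by (simp add: Esimps algebra_simps add_eq_0_iff)
qed

lemma rel3:
  assumes A: "A \<in> S" "1 \<le> i" "i < N" "A ! (i - 1) \<noteq> A ! i"
  shows "eg A i * eg A i = csm (\<omega> 0) (eg A i)"
proof -
  have "gen_ok r t (Eg A i)" using A by (auto simp: ss)
  from ev_eq[OF veq.rel3[OF this, of \<omega>]]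
  show ?thesis by (simp add: Esimps)
qed

lemma r2c_hat:
  assumes A: "A \<in> S" "1 \<le> i" "i < N" "A ! (i - 1) \<noteq> A ! i" "1 \<le> j" "j \<le> N" "j \<noteq> i" "j \<noteq> i + 1"
  shows "shg A i * yg A j = yg (swp i A) j * shg A i"
proof -
  have "ev (Comp (SHg A i) (Comp (Yg A j) (Idm A))) = ev (Comp (Yg (swp i A) j) (Comp (SHg A i) (Idm A)))"
    by (rule mon_E[OF monpair.r2c[of j i] w2[where Y="A"] w2[where Y="swp i A"]]) (use A in \<open>auto simp: ss\<close>)
  then show ?thesis by (simp add: E_comp)
qed

lemma r2c_hon:
  assumes A: "A \<in> S" "1 \<le> i" "i < N" "A ! (i - 1) = A ! i" "1 \<le> j" "j \<le> N" "j \<noteq> i" "j \<noteq> i + 1"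
  shows "sg A i * yg A j = yg A j * sg A i"
proof -
  have "ev (Comp (Sg A i) (Comp (Yg A j) (Idm A))) = ev (Comp (Yg A j) (Comp (Sg A i) (Idm A)))"
    by (rule mon_E[OF monpair.r2c[of j i] w2[where Y="A"] w2[where Y="A"]]) (use A in \<open>auto simp: ss\<close>)
  then show ?thesis by (simp add: E_comp)
qed

lemma r5c:
  assumes A: "A \<in> S" "1 \<le> i" "i < N" "A ! (i - 1) \<noteq> A ! i" "1 \<le> j" "j \<le> N" "j \<noteq> i" "j \<noteq> i + 1"
  shows "eg A i * yg A j = yg A j * eg A i"
proof -
  have "ev (Comp (Eg A i) (Comp (Yg A j) (Idm A))) = ev (Comp (Yg A j) (Comp (Eg A i) (Idm A)))"
    by (rule mon_E[OF monpair.r5c[of j i] w2[where Y="A"] w2[where Y="A"]]) (use A in \<open>auto simp: ss\<close>)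
  then show ?thesis by (simp add: E_comp)
qed

lemma r5d:
  assumes A: "A \<in> S"
  shows "yg A i * yg A j = yg A j * yg A i"
proof (cases "1 \<le> i \<and> i \<le> N \<and> 1 \<le> j \<and> j \<le> N")
  case True
  have "ev (Comp (Yg A i) (Comp (Yg A j) (Idm A))) = ev (Comp (Yg A j) (Comp (Yg A i) (Idm A)))"
    by (rule mon_E[OF monpair.r5d[of i j] w2[where Y="A"] w2[where Y="A"]]) (use A True in \<open>auto simp: ss\<close>)
  then show ?thesis by (simp add: E_comp)
next
  case False
  then have "yg A i = 0 \<or> yg A j = 0" by (auto intro!: bad)
  then show ?thesis by auto
qed

lemma r6g:
  assumes A: "A \<in> S" "2 \<le> i" "i < N" "A ! (i - 2) \<noteq> A ! (i - 1)" "A ! (i - 1) \<noteq> A ! i"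
  shows "eg A i * eg A (i - 1) * eg A i = eg A i"
proof -
  have m: "monpair [LE i, LE (i - 1), LE i] [LE i]"
    using monpair.r6g[of "i - 1"] A(2) by (simp add: numeral_2_eq_2)
  have "ev (Comp (Eg A i) (Comp (Eg A (i - 1)) (Comp (Eg A i) (Idm A)))) = ev (Comp (Eg A i) (Idm A))"
    by (rule mon_E[OF m w3[where Y="A" and Z = A] w1]) (use A in \<open>auto simp: ss numeral_2_eq_2\<close>)
  then show ?thesis by (simp add: E_comp mult.assoc)
qed

lemma r6h:
  assumes A: "A \<in> S" "2 \<le> i" "i < N" "A ! (i - 2) \<noteq> A ! (i - 1)" "A ! (i - 1) \<noteq> A ! i"
  shows "eg A (i - 1) * eg A i * eg A (i - 1) = eg A (i - 1)"
proof -
  have m: "monpair [LE (i - 1), LE i, LE (i - 1)] [LE (i - 1)]"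
    using monpair.r6h[of "i - 1"] A(2) by (simp add: numeral_2_eq_2)
  have "ev (Comp (Eg A (i - 1)) (Comp (Eg A i) (Comp (Eg A (i - 1)) (Idm A)))) = ev (Comp (Eg A (i - 1)) (Idm A))"
    by (rule mon_E[OF m w3[where Y="A" and Z = A] w1]) (use A in \<open>auto simp: ss numeral_2_eq_2\<close>)
  then show ?thesis by (simp add: E_comp mult.assoc)
qed

lemma c2_eq:
  assumes A: "A \<in> S" "2 \<le> i" "i < N" "A ! (i - 2) \<noteq> A ! (i - 1)" "A ! (i - 1) \<noteq> A ! i"
  shows "A ! (i - 2) = A ! i"
  using seq_pm[OF A(1), of "i - 2"] seq_pm[OF A(1), of "i - 1"] seq_pm[OF A(1), of i] A by auto

lemma F12:
  assumes A: "A \<in> S" "2 \<le> i" "i < N" "A ! (i - 2) \<noteq> A ! (i - 1)" "A ! (i - 1) \<noteq> A ! i"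
  shows "sg (swp i A) (i - 1) * ehg A i * eg A (i - 1) = shg A i * eg A (i - 1)"
proof -
  have q: "A ! (i - 2) = A ! i" by (rule c2_eq[OF A])
  have m: "monpair [LS (i - 1), LE i, LE (i - 1)] [LS i, LE (i - 1)]"
    using monpair.r6c[of "i - 1"] A(2) by (simp add: numeral_2_eq_2)
  have "ev (Comp (Sg (swp i A) (i - 1)) (Comp (EHg A i) (Comp (Eg A (i - 1)) (Idm A))))
      = ev (Comp (SHg A i) (Comp (Eg A (i - 1)) (Idm A)))"
    by (rule mon_E[OF m w3[where Y="A" and Z = "swp i A"] w2[where Y = A]])
       (use A q in \<open>auto simp: ss numeral_2_eq_2\<close>)
  then show ?thesis by (simp add: E_comp mult.assoc)
qed

lemma F13:
  assumes A: "A \<in> S" "2 \<le> i" "i < N" "A ! (i - 2) \<noteq> A ! (i - 1)" "A ! (i - 1) \<noteq> A ! i"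
  shows "eg A (i - 1) * ehg (swp i A) i * sg (swp i A) (i - 1) = eg A (i - 1) * shg (swp i A) i"
proof -
  have q: "A ! (i - 2) = A ! i" by (rule c2_eq[OF A])
  have m: "monpair [LE (i - 1), LE i, LS (i - 1)] [LE (i - 1), LS i]"
    using monpair.r6d[of "i - 1"] A(2) by (simp add: numeral_2_eq_2)
  have "ev (Comp (Eg A (i - 1)) (Comp (EHg (swp i A) i) (Comp (Sg (swp i A) (i - 1)) (Idm (swp i A)))))
      = ev (Comp (Eg A (i - 1)) (Comp (SHg (swp i A) i) (Idm (swp i A))))"
    by (rule mon_E[OF m w3[where Y="swp i A" and Z = "A"] w2[where Y = A]])
       (use A q in \<open>auto simp: ss numeral_2_eq_2\<close>)
  then show ?thesis by (simp add: E_comp mult.assoc)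
qed

lemma yp0[simp]: "yp X i 0 = I X" by simp
lemma ypS: "yp X i (Suc k) = yg X i * yp X i k" by (simp add: E_comp)

lemma rel4:
  assumes A: "A \<in> S" "2 \<le> N" "A ! 0 = 1" "A ! 1 = -1"
  shows "eg A 1 * yp A 1 k * eg A 1 = csm (\<omega> k) (eg A 1)"
  using ev_eq[OF veq.rel4[OF A, of \<omega> k]] by (simp add: Esimps mult.assoc)

end

fun addexp :: "nat list \<Rightarrow> nat list \<Rightarrow> nat list" where
  "addexp [] ys = ys"
| "addexp xs [] = xs"
| "addexp (x # xs) (y # ys) = (x + y) # addexp xs ys"

definition pmul :: "(complex \<times> nat list) list \<Rightarrow> (complex \<times> nat list) list \<Rightarrow> (complex \<times> nat list) list" where
  "pmul P Q = concat (map (\<lambda>(c, e). map (\<lambda>(d, e'). (c * d, addexp e e')) Q) P)"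

definition psc :: "complex \<Rightarrow> (complex \<times> nat list) list \<Rightarrow> (complex \<times> nat list) list" where
  "psc c P = map (\<lambda>(d, e). (c * d, e)) P"

definition pok :: "nat \<Rightarrow> (complex \<times> nat list) list \<Rightarrow> bool" where
  "pok i P = (\<forall>(c, e) \<in> set P. length e < i)"

lemma length_addexp[simp]: "length (addexp xs ys) = max (length xs) (length ys)"
  by (induction xs ys rule: addexp.induct) auto

lemma pok_append[simp]: "pok i (P @ Q) = (pok i P \<and> pok i Q)"
  by (auto simp: pok_def)
lemma pok_psc[simp]: "pok i (psc c P) = pok i P"
  by (auto simp: pok_def psc_def)
lemma pok_pmul: "pok i P \<Longrightarrow> pok i Q \<Longrightarrow> pok i (pmul P Q)"
  by (fastforce simp: pok_def pmul_def)
lemma pok_mono: "pok i P \<Longrightarrow> i \<le> j \<Longrightarrow> pok j P"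
  by (fastforce simp: pok_def)
lemma pok_Nil[simp]: "pok i []" by (simp add: pok_def)

definition mono :: "nat \<Rightarrow> nat \<Rightarrow> (complex \<times> nat list) list" where
  "mono j m = [(1, replicate (j - 1) 0 @ [m])]"
lemma pok_mono_poly: "1 \<le> j \<Longrightarrow> j < i \<Longrightarrow> pok i (mono j m)"
  by (simp add: pok_def mono_def)
definition cst :: "complex \<Rightarrow> (complex \<times> nat list) list" where
  "cst c = [(c, [])]"
lemma pok_cst: "1 \<le> i \<Longrightarrow> pok i (cst c)"
  by (simp add: pok_def cst_def)

context vb begin

abbreviation "pv X P \<equiv> ev (peval X P)"
abbreviation "mt X j es \<equiv> ev (monoterm X j es)"

declare ypow.simps(2)[simp del]
declare ypS[simp]

lemma yp_IL[simp]: "I X * yp X i k = yp X i k"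
  by (induction k) (simp_all add: mult.assoc[symmetric])
lemma yp_IR[simp]: "yp X i k * I X = yp X i k"
  by (induction k) (simp_all add: mult.assoc)

lemma yp_I'[simp]: "I X * (yp X i k * a) = yp X i k * a" "a * yp X i k * I X = a * yp X i k"
  by (simp_all add: mult.assoc[symmetric] mult.assoc)

lemma yp_add: "yp X i (a + b) = yp X i a * yp X i b"
  by (induction a) (simp_all add: mult.assoc)

lemma ypS': "yp X i (Suc k) = yp X i k * yg X i"
  using yp_add[of X i k 1] by simp

lemma comm_pow:
  assumes "a * yg X j = yg Y j' * a" "I Y * a = a" "a * I X = a"
  shows "a * yp X j k = yp Y j' k * a"
proof (induction k)
  case 0 then show ?case using assms by simp
next
  case (Suc k)
  have "a * yp X j (Suc k) = (a * yg X j) * yp X j k" by (simp add: ypS mult.assoc)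
  also have "\<dots> = yg Y j' * (a * yp X j k)" by (simp add: assms mult.assoc)
  also have "\<dots> = yp Y j' (Suc k) * a" by (simp add: Suc ypS mult.assoc)
  finally show ?case .
qed

lemma y_comm_pow:
  assumes "X \<in> S"
  shows "yg X i * yp X j k = yp X j k * yg X i"
  by (rule comm_pow) (simp_all add: r5d[OF assms])

lemma yp_comm:
  assumes "X \<in> S"
  shows "yp X i a * yp X j b = yp X j b * yp X i a"
  by (rule comm_pow) (simp_all add: y_comm_pow[OF assms])

lemma sign_powL:
  assumes "a * yg X j = - (a * yg X l)" "X \<in> S"
  shows "a * yp X j k = csm ((-1) ^ k) (a * yp X l k)"
proof (induction k)
  case 0 then show ?case by simp
next
  case (Suc k)
  have "a * yp X j (Suc k) = (a * yp X j k) * yg X j" by (simp only: ypS' mult.assoc)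
  also have "\<dots> = csm ((-1) ^ k) (a * (yp X l k * yg X j))" by (simp add: Suc csm_multL mult.assoc)
  also have "\<dots> = csm ((-1) ^ k) (a * yg X j * yp X l k)"
    by (simp add: y_comm_pow[OF assms(2)] mult.assoc)
  also have "\<dots> = csm ((-1) ^ Suc k) (a * yp X l (Suc k))"
    by (simp add: assms(1) ypS mult.assoc csm_m1[symmetric] csm_multL)
  finally show ?case .
qed

lemma sign_powR:
  assumes "yg X j * a = - (yg X l * a)" "X \<in> S"
  shows "yp X j k * a = csm ((-1) ^ k) (yp X l k * a)"
proof (induction k)
  case 0 then show ?case by simp
next
  case (Suc k)
  have "yp X j (Suc k) * a = yg X j * (yp X j k * a)" by (simp add: ypS mult.assoc)
  also have "\<dots> = csm ((-1) ^ k) (yg X j * yp X l k * a)" by (simp add: Suc csm_multR mult.assoc)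
  also have "\<dots> = csm ((-1) ^ k) (yp X l k * (yg X j * a))"
    by (simp add: y_comm_pow[OF assms(2)] mult.assoc)
  also have "\<dots> = csm ((-1) ^ Suc k) (yp X l (Suc k) * a)"
    by (simp add: assms(1) mult.assoc[symmetric] csm_m1[symmetric] csm_multR csm_multL y_comm_pow[OF assms(2)])
  finally show ?case .
qed

lemma mt_Nil[simp]: "mt X j [] = I X" by simp
lemma mt_Cons[simp]: "mt X j (k # ks) = yp X j k * mt X (Suc j) ks" by (simp add: E_comp)
declare monoterm.simps[simp del]

lemma mt_IL[simp]: "I X * mt X j es = mt X j es"
  by (induction es arbitrary: j) (simp_all add: mult.assoc[symmetric])
lemma mt_IR[simp]: "mt X j es * I X = mt X j es"
  by (induction es arbitrary: j) (simp_all add: mult.assoc)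

lemma y_comm_mt:
  assumes "X \<in> S"
  shows "yg X l * mt X j es = mt X j es * yg X l"
proof (induction es arbitrary: j)
  case Nil then show ?case by simp
next
  case (Cons k ks)
  have "yg X l * mt X j (k # ks) = (yg X l * yp X j k) * mt X (Suc j) ks" by (simp add: mult.assoc)
  also have "\<dots> = yp X j k * (yg X l * mt X (Suc j) ks)" by (simp add: y_comm_pow[OF assms] mult.assoc)
  also have "\<dots> = mt X j (k # ks) * yg X l" by (simp add: Cons mult.assoc)
  finally show ?case .
qed

lemma yp_comm_mt:
  assumes "X \<in> S"
  shows "mt X j es * yp X l k = yp X l k * mt X j es"
  by (rule comm_pow) (simp_all add: y_comm_mt[OF assms])

lemma mt_mult:
  assumes "X \<in> S"
  shows "mt X j e1 * mt X j e2 = mt X j (addexp e1 e2)"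
proof (induction e1 e2 arbitrary: j rule: addexp.induct)
  case (1 ys) then show ?case by simp
next
  case (2 v va) then show ?case by (simp add: mult.assoc)
next
  case (3 x xs y ys)
  have "mt X j (x # xs) * mt X j (y # ys) = yp X j x * (mt X (Suc j) xs * yp X j y) * mt X (Suc j) ys"
    by (simp add: mult.assoc)
  also have "\<dots> = (yp X j x * yp X j y) * (mt X (Suc j) xs * mt X (Suc j) ys)"
    by (simp add: yp_comm_mt[OF assms] mult.assoc)
  also have "\<dots> = mt X j (addexp (x # xs) (y # ys))" by (simp add: 3 yp_add)
  finally show ?case .
qed

lemma pv_Nil[simp]: "pv X [] = 0" by (simp add: E_zer)
lemma pv_Cons[simp]: "pv X ((c, e) # P) = csm c (mt X 1 e) + pv X P" by (simp add: Esimps)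
declare peval.simps[simp del]

lemma pv_append[simp]: "pv X (P @ Q) = pv X P + pv X Q"
  by (induction P) (auto simp: add.assoc)

lemma pv_IL[simp]: "I X * pv X P = pv X P"
  by (induction P) (auto simp: distrib_left csm_multR)
lemma pv_IR[simp]: "pv X P * I X = pv X P"
  by (induction P) (auto simp: distrib_right csm_multL)

lemma pv_psc: "pv X (psc c P) = csm c (pv X P)"
  by (induction P) (auto simp: psc_def csm_add)

lemma pv_pmul1:
  assumes "X \<in> S"
  shows "pv X (map (\<lambda>(d, e'). (c * d, addexp e e')) Q) = csm c (mt X 1 e) * pv X Q"
  by (induction Q) (auto simp: distrib_left csm_multL csm_multR mt_mult[OF assms] csm_add)

lemma pv_pmul:
  assumes "X \<in> S"
  shows "pv X (pmul P Q) = pv X P * pv X Q"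
proof (induction P)
  case Nil then show ?case by (simp add: pmul_def)
next
  case (Cons p P)
  obtain c e where p: "p = (c, e)" by (cases p)
  have "pmul (p # P) Q = map (\<lambda>(d, e'). (c * d, addexp e e')) Q @ pmul P Q"
    by (simp add: pmul_def p)
  then show ?case by (simp add: Cons pv_pmul1[OF assms] p distrib_right)
qed

lemma mt_rep: "mt X l (replicate c 0 @ [m]) = yp X (l + c) m"
  by (induction c arbitrary: l) simp_all

lemma pv_mono: "1 \<le> j \<Longrightarrow> pv X (mono j m) = yp X j m"
  by (simp add: mono_def mt_rep)

lemma pv_cst: "pv X (cst c) = csm c (I X)"
  by (simp add: cst_def)

lemma comm_mt:
  assumes "\<And>l. 1 \<le> l \<Longrightarrow> l < i \<Longrightarrow> g * yg X l = yg X' l * g" "I X' * g = g" "g * I X = g"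
  shows "1 \<le> j \<Longrightarrow> j + length es \<le> i \<Longrightarrow> g * mt X j es = mt X' j es * g"
proof (induction es arbitrary: j)
  case Nil then show ?case using assms by simp
next
  case (Cons k ks)
  have "g * mt X j (k # ks) = (g * yp X j k) * mt X (Suc j) ks" by (simp add: mult.assoc)
  also have "\<dots> = yp X' j k * (g * mt X (Suc j) ks)"
    using Cons.prems by (simp add: comm_pow[OF assms(1) assms(2,3)] mult.assoc)
  also have "\<dots> = mt X' j (k # ks) * g" using Cons by (simp add: mult.assoc)
  finally show ?case .
qed

lemma comm_pv:
  assumes "\<And>l. 1 \<le> l \<Longrightarrow> l < i \<Longrightarrow> g * yg X l = yg X' l * g" "I X' * g = g" "g * I X = g"
    and "pok i P"
  shows "g * pv X P = pv X' P * g"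
  using assms(4)
proof (induction P)
  case Nil then show ?case by simp
next
  case (Cons p P)
  obtain c e where p: "p = (c, e)" by (cases p)
  have l: "length e < i" using Cons.prems p by (simp add: pok_def)
  have "g * mt X 1 e = mt X' 1 e * g" by (rule comm_mt[OF assms(1-3)]) (use l in auto)
  then show ?case using Cons by (simp add: p distrib_left distrib_right csm_multL csm_multR pok_def)
qed

lemma e_comm_pv:
  assumes A: "X \<in> S" "1 \<le> i" "i < N" "X ! (i - 1) \<noteq> X ! i" and P: "pok i P"
  shows "eg X i * pv X P = pv X P * eg X i"
  by (rule comm_pv[OF _ _ _ P]) (use A in \<open>auto intro!: r5c\<close>)

lemma sh_comm_pv:
  assumes A: "X \<in> S" "1 \<le> i" "i < N" "X ! (i - 1) \<noteq> X ! i" and P: "pok i P"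
  shows "shg X i * pv X P = pv (swp i X) P * shg X i"
  by (rule comm_pv[OF _ _ _ P]) (use A in \<open>auto intro!: r2c_hat\<close>)

lemma y_comm_e:
  assumes A: "X \<in> S" "1 \<le> i" "i < N" "X ! (i - 1) \<noteq> X ! i" "1 \<le> l" "l \<le> N" "l \<noteq> i" "l \<noteq> i + 1"
  shows "eg X i * yp X l k = yp X l k * eg X i"
  by (rule comm_pow) (use A in \<open>auto intro!: r5c\<close>)

end

fun mpow :: "mor \<Rightarrow> mor \<Rightarrow> nat \<Rightarrow> mor" where
  "mpow u a 0 = u"
| "mpow u a (Suc n) = a * mpow u a n"

context vb begin

definition Sp :: "nat \<Rightarrow> int list \<Rightarrow> int list set" where
  "Sp i p = {A. A \<in> S \<and> take i A = p \<and> 1 \<le> i \<and> i < N \<and> A ! (i - 1) \<noteq> A ! i}"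

definition unif :: "nat \<Rightarrow> int list \<Rightarrow> (int list \<Rightarrow> mor) \<Rightarrow> (int list \<Rightarrow> mor) \<Rightarrow> bool" where
  "unif i p F G = (\<exists>P. pok i P \<and> (\<forall>A \<in> Sp i p. F A = pv A P * G A))"

definition good :: "nat \<Rightarrow> int list \<Rightarrow> nat \<Rightarrow> bool" where
  "good i p k = unif i p (\<lambda>A. eg A i * yp A i k * eg A i) (\<lambda>A. eg A i)"

lemma SpD: assumes "A \<in> Sp i p"
  shows "A \<in> S" "take i A = p" "1 \<le> i" "i < N" "A ! (i - 1) \<noteq> A ! i"
  using assms by (simp_all add: Sp_def)

lemma unif_intro: "pok i P \<Longrightarrow> (\<And>A. A \<in> Sp i p \<Longrightarrow> F A = pv A P * G A) \<Longrightarrow> unif i p F G"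
  unfolding unif_def by blast

lemma unif_add: "unif i p F1 G \<Longrightarrow> unif i p F2 G \<Longrightarrow> unif i p (\<lambda>A. F1 A + F2 A) G"
  unfolding unif_def
  apply (elim exE conjE)
  subgoal for P1 P2 by (rule exI[of _ "P1 @ P2"]) (simp add: distrib_right)
  done

lemma unif_csm: "unif i p F G \<Longrightarrow> unif i p (\<lambda>A. csm c (F A)) G"
  unfolding unif_def
  apply (elim exE conjE)
  subgoal for P by (rule exI[of _ "psc c P"]) (simp add: pv_psc csm_multL)
  done

lemma unif_pv: "pok i Q \<Longrightarrow> unif i p F G \<Longrightarrow> unif i p (\<lambda>A. pv A Q * F A) G"
  unfolding unif_def
  apply (elim exE conjE)
  subgoal for P by (rule exI[of _ "pmul Q P"]) (simp add: pv_pmul SpD pok_pmul mult.assoc)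
  done

lemma unif_cong: "unif i p F G \<Longrightarrow> (\<And>A. A \<in> Sp i p \<Longrightarrow> F' A = F A) \<Longrightarrow> unif i p F' G"
  unfolding unif_def by auto

lemma unif_zero: "unif i p (\<lambda>A. 0) G"
  unfolding unif_def by (rule exI[of _ "[]"]) simp

section \<open>Flip\<close>

lemma flip_e:
  assumes X: "X \<in> S" "1 \<le> i" "i < N" "X ! (i - 1) \<noteq> X ! i"
  shows "shg X i * eg X i * shg (swp i X) i = eg (swp i X) i"
proof -
  have C: "swp i X \<in> S" "swp i X ! (i - 1) \<noteq> swp i X ! i" "swp i (swp i X) = X"
    using X by (auto simp: ss)
  have "shg X i * eg X i * shg (swp i X) i = ehg X i * shg (swp i X) i" by (simp add: F2[OF X])
  also have "\<dots> = eg (swp i X) i" using F3'[OF C(1) X(2,3) C(2)] C(3) by simp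
  finally show ?thesis .
qed

lemma conjZ:
  assumes X: "X \<in> S" "1 \<le> i" "i < N" "X ! (i - 1) \<noteq> X ! i"
  shows "shg X i * yg X i * shg (swp i X) i = yg (swp i X) (i + 1) + eg (swp i X) i"
proof -
  have C: "swp i X \<in> S" "swp i X ! (i - 1) \<noteq> swp i X ! i" "swp i (swp i X) = X"
    using X by (auto simp: ss)
  have inv: "shg X i * shg (swp i X) i = I (swp i X)"
    using hat_inv[OF C(1) X(2,3) C(2)] C(3) by simp
  have f3: "ehg X i * shg (swp i X) i = eg (swp i X) i"
    using F3'[OF C(1) X(2,3) C(2)] C(3) by simp
  have "shg X i * yg X i * shg (swp i X) i
      = yg (swp i X) (i + 1) * (shg X i * shg (swp i X) i) + ehg X i * shg (swp i X) i"
    by (simp add: rel7c[OF X] distrib_right mult.assoc)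
  also have "\<dots> = yg (swp i X) (i + 1) + eg (swp i X) i" by (simp add: inv f3)
  finally show ?thesis .
qed

lemma conjZpow:
  assumes X: "X \<in> S" "1 \<le> i" "i < N" "X ! (i - 1) \<noteq> X ! i"
  shows "shg X i * yp X i k * shg (swp i X) i = mpow (I (swp i X)) (yg (swp i X) (i + 1) + eg (swp i X) i) k"
proof -
  have C: "swp i X \<in> S" "swp i X ! (i - 1) \<noteq> swp i X ! i" "swp i (swp i X) = X"
    using X by (auto simp: ss)
  have inv: "shg X i * shg (swp i X) i = I (swp i X)"
    using hat_inv[OF C(1) X(2,3) C(2)] C(3) by simp
  have inv2: "shg (swp i X) i * shg X i = I X"
    using hat_inv[OF X] by simp
  show ?thesis
  proof (induction k)
    case 0 then show ?case by (simp add: inv)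
  next
    case (Suc k)
    have "shg X i * yp X i (Suc k) * shg (swp i X) i
        = shg X i * yg X i * (shg (swp i X) i * shg X i) * yp X i k * shg (swp i X) i"
      by (simp add: inv2 mult.assoc)
    also have "\<dots> = (shg X i * yg X i * shg (swp i X) i) * (shg X i * yp X i k * shg (swp i X) i)"
      by (simp add: mult.assoc)
    also have "\<dots> = mpow (I (swp i X)) (yg (swp i X) (i + 1) + eg (swp i X) i) (Suc k)"
      by (simp add: Suc conjZ[OF X])
    finally show ?case .
  qed
qed

lemma sgnW:
  assumes C: "C \<in> S" "1 \<le> i" "i < N" "C ! (i - 1) \<noteq> C ! i"
  shows "eg C i * yp C (i + 1) m = csm ((-1) ^ m) (eg C i * yp C i m)"
proof (rule sign_powL[OF _ C(1)])
  show "eg C i * yg C (i + 1) = - (eg C i * yg C i)" using rel8a[OF C] by simp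
qed

lemma flip_claim:
  assumes gp: "\<And>k. good i p' k"
  shows "unif i p' (\<lambda>C. eg C i * yp C (i + 1) m * mpow (I C) (yg C (i + 1) + eg C i) n * eg C i) (\<lambda>C. eg C i)"
proof (induction n arbitrary: m)
  case 0
  obtain B where B: "pok i B" "\<And>C. C \<in> Sp i p' \<Longrightarrow> eg C i * yp C i m * eg C i = pv C B * eg C i"
    using gp[of m] unfolding good_def unif_def by blast
  show ?case
  proof (rule unif_cong[OF unif_csm[of i p' "\<lambda>C. pv C B * eg C i" _ "(-1) ^ m"]])
    show "unif i p' (\<lambda>C. pv C B * eg C i) (\<lambda>C. eg C i)"
      by (rule unif_intro[OF B(1)]) simp
  next
    fix C assume Cs: "C \<in> Sp i p'"
    note C = SpD[OF Cs]
    have "eg C i * yp C (i + 1) m * mpow (I C) (yg C (i + 1) + eg C i) 0 * eg C i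
        = (eg C i * yp C (i + 1) m) * eg C i" by (simp add: mult.assoc)
    also have "\<dots> = csm ((-1) ^ m) (eg C i * yp C i m * eg C i)"
      by (simp only: sgnW[OF C(1,3,4,5)] csm_multL)
    also have "\<dots> = csm ((-1) ^ m) (pv C B * eg C i)" by (simp add: B(2)[OF Cs])
    finally show "eg C i * yp C (i + 1) m * mpow (I C) (yg C (i + 1) + eg C i) 0 * eg C i
        = csm ((-1) ^ m) (pv C B * eg C i)" .
  qed
next
  case (Suc n)
  obtain B where B: "pok i B" "\<And>C. C \<in> Sp i p' \<Longrightarrow> eg C i * yp C i m * eg C i = pv C B * eg C i"
    using gp[of m] unfolding good_def unif_def by blast
  show ?case
  proof (rule unif_cong[OF unif_add[OF Suc[of "Suc m"] unif_csm[OF unif_pv[OF B(1) Suc[of 0]], of "(-1) ^ m"]]])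
    fix C assume Cs: "C \<in> Sp i p'"
    note C = SpD[OF Cs]
    let ?L = "mpow (I C) (yg C (i + 1) + eg C i) n"
    have sg: "eg C i * yp C (i + 1) m = csm ((-1) ^ m) (eg C i * yp C i m)"
      by (rule sgnW[OF C(1,3,4,5)])
    have e1: "eg C i * yp C (i + 1) m * eg C i = csm ((-1) ^ m) (pv C B * eg C i)"
      by (simp only: sg csm_multL B(2)[OF Cs])
    have "eg C i * yp C (i + 1) m * mpow (I C) (yg C (i + 1) + eg C i) (Suc n) * eg C i
        = eg C i * (yp C (i + 1) m * yg C (i + 1)) * ?L * eg C i
          + (eg C i * yp C (i + 1) m * eg C i) * ?L * eg C i"
      by (simp add: distrib_left distrib_right mult.assoc)
    also have "\<dots> = eg C i * yp C (i + 1) (Suc m) * ?L * eg C i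
          + csm ((-1) ^ m) (pv C B * (eg C i * yp C (i + 1) 0 * ?L * eg C i))"
      by (simp only: e1 ypS'[symmetric]) (simp add: csm_multL mult.assoc)
    finally show "eg C i * yp C (i + 1) m * mpow (I C) (yg C (i + 1) + eg C i) (Suc n) * eg C i
        = eg C i * yp C (i + 1) (Suc m) * ?L * eg C i
          + csm ((-1) ^ m) (pv C B * (eg C i * yp C (i + 1) 0 * ?L * eg C i))" .
  qed
qed

lemma flip:
  assumes sw: "\<And>A. A \<in> Sp i p \<Longrightarrow> swp i A \<in> Sp i p'" and gp: "\<And>k. good i p' k"
  shows "good i p k"
proof -
  obtain P where P: "pok i P"
    "\<And>C. C \<in> Sp i p' \<Longrightarrow> eg C i * yp C (i + 1) 0 * mpow (I C) (yg C (i + 1) + eg C i) k * eg C i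
       = pv C P * eg C i"
    using flip_claim[OF gp, of 0 k] unfolding unif_def by blast
  show ?thesis unfolding good_def
  proof (rule unif_intro[OF P(1)])
    fix A assume As: "A \<in> Sp i p"
    note A = SpD[OF As]
    define C where "C = swp i A"
    have Cs: "C \<in> Sp i p'" using sw[OF As] by (simp add: C_def)
    note Cc = SpD[OF Cs]
    have sC: "swp i C = A" using A by (simp add: C_def seq_len)
    have fe: "eg A i = shg C i * eg C i * shg A i"
      using flip_e[OF Cc(1,3,4,5)] sC by simp
    have cz: "shg A i * yp A i k * shg C i = mpow (I C) (yg C (i + 1) + eg C i) k"
      using conjZpow[OF A(1,3,4,5), of k] by (simp add: C_def)
    have cp: "shg C i * pv C P = pv A P * shg C i"
      using sh_comm_pv[OF Cc(1,3,4,5) P(1)] sC by simp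
    have "eg A i * yp A i k * eg A i
        = shg C i * (eg C i * (shg A i * yp A i k * shg C i) * eg C i) * shg A i"
      by (simp add: fe mult.assoc)
    also have "\<dots> = shg C i * (pv C P * eg C i) * shg A i"
      using P(2)[OF Cs] by (simp add: cz)
    also have "\<dots> = pv A P * (shg C i * eg C i * shg A i)"
      by (simp add: mult.assoc[symmetric] cp)
    also have "\<dots> = pv A P * eg A i" by (simp add: fe)
    finally show "eg A i * yp A i k * eg A i = pv A P * eg A i" .
  qed
qed

end

context vb begin

definition TT :: "int list \<Rightarrow> nat \<Rightarrow> mor" where
  "TT A j = shg (swp (Suc j) A) (Suc j) * sg (swp (Suc j) A) j * shg A (Suc j)"

definition LL :: "int list \<Rightarrow> nat \<Rightarrow> mor" where
  "LL A j = yg A (Suc j) - eg A (Suc j) + eg A j"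

context
  fixes A j
  assumes A: "A \<in> S" "1 \<le> j" "Suc j < N" "A ! (j - 1) \<noteq> A ! j" "A ! j \<noteq> A ! Suc j"
begin

abbreviation "B \<equiv> swp (Suc j) A"

lemma Aeq: "A ! (j - 1) = A ! Suc j"
  using c2_eq[of A "Suc j"] A by (simp add: numeral_2_eq_2)

lemma Bf: "B \<in> S" "swp (Suc j) B = A" "B ! j \<noteq> B ! Suc j" "B ! (j - 1) = B ! j"
  "B ! j = A ! Suc j" "B ! Suc j = A ! j"
  using A Aeq by (auto simp: ss)

lemma cA: "A \<in> S" "1 \<le> Suc j" "Suc j < N" "A ! (Suc j - 1) \<noteq> A ! Suc j"
  using A by auto
lemma cB: "B \<in> S" "1 \<le> Suc j" "Suc j < N" "B ! (Suc j - 1) \<noteq> B ! Suc j"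
  using A Bf by auto
lemma cA': "A \<in> S" "2 \<le> Suc j" "Suc j < N" "A ! (Suc j - 2) \<noteq> A ! (Suc j - 1)" "A ! (Suc j - 1) \<noteq> A ! Suc j"
  using A by (auto simp: numeral_2_eq_2)
lemma cf: "A \<in> S" "1 \<le> j" "j < N" "A ! (j - 1) \<noteq> A ! j"
  using A by auto

lemma idB1[simp]: "I A * shg B (Suc j) = shg B (Suc j)" "I A * ehg B (Suc j) = ehg B (Suc j)"
  by (metis Bf(2) idL(4), metis Bf(2) idL(5))
lemma idB2[simp]: "I A * (shg B (Suc j) * a) = shg B (Suc j) * a" "I A * (ehg B (Suc j) * a) = ehg B (Suc j) * a"
  by (simp_all add: mult.assoc[symmetric])

lemma hA: "shg B (Suc j) * shg A (Suc j) = I A"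
  using hat_inv[OF cA] by simp
lemma hB: "shg A (Suc j) * shg B (Suc j) = I B"
  using hat_inv[OF cB] Bf(2) by simp
lemma sB: "sg B j * sg B j = I B"
  using s_inv[of B j] Bf A by auto
lemma f2: "shg A (Suc j) * eg A (Suc j) = ehg A (Suc j)"
  using F2[OF cA] .
lemma f3B: "eg A (Suc j) * shg B (Suc j) = ehg B (Suc j)"
  using F3[OF cB] Bf(2) by simp
lemma f3A: "ehg B (Suc j) * shg A (Suc j) = eg A (Suc j)"
  using F3'[OF cA] .
lemma f12: "sg B j * ehg A (Suc j) * eg A j = shg A (Suc j) * eg A j"
  using F12[OF cA'] by simp
lemma f13: "eg A j * ehg B (Suc j) * sg B j = eg A j * shg B (Suc j)"
  using F13[OF cA'] by simp
lemma efe: "eg A (Suc j) * eg A j * eg A (Suc j) = eg A (Suc j)"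
  using r6g[OF cA'] by simp
lemma fef: "eg A j * eg A (Suc j) * eg A j = eg A j"
  using r6h[OF cA'] by simp
lemma flipA: "shg A (Suc j) * eg A (Suc j) * shg B (Suc j) = eg B (Suc j)"
  using flip_e[OF cA] by simp
lemma conjZA: "shg A (Suc j) * yg A (Suc j) * shg B (Suc j) = yg B (Suc (Suc j)) + eg B (Suc j)"
  using conjZ[OF cA] by simp
lemma r7dB: "shg B (Suc j) * yg B (Suc (Suc j)) = yg A (Suc j) * shg B (Suc j) - ehg B (Suc j)"
  using rel7d[OF cB] Bf(2) by simp
lemma r2cB: "sg B j * yg B (Suc (Suc j)) = yg B (Suc (Suc j)) * sg B j"
  using r2c_hon[of B j "Suc (Suc j)"] Bf A by auto

lemma TT_inv: "TT A j * TT A j = I A"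
proof -
  have "TT A j * TT A j = shg B (Suc j) * sg B j * (shg A (Suc j) * shg B (Suc j)) * sg B j * shg A (Suc j)"
    by (simp add: TT_def mult.assoc)
  also have "\<dots> = shg B (Suc j) * (sg B j * sg B j) * shg A (Suc j)"
    by (simp add: hB mult.assoc)
  also have "\<dots> = I A" by (simp add: sB hA)
  finally show ?thesis .
qed

lemma TT_I[simp]: "I A * TT A j = TT A j" "TT A j * I A = TT A j"
  by (simp_all add: TT_def mult.assoc)

lemma TT_ef: "eg A (Suc j) * eg A j = TT A j * eg A j"
proof -
  have "TT A j * (eg A (Suc j) * eg A j) = shg B (Suc j) * (sg B j * (shg A (Suc j) * eg A (Suc j)) * eg A j)"
    by (simp add: TT_def mult.assoc)
  also have "\<dots> = shg B (Suc j) * (shg A (Suc j) * eg A j)"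
    by (simp add: f2 f12)
  also have "\<dots> = eg A j" by (simp add: mult.assoc[symmetric] hA)
  finally have "TT A j * (eg A (Suc j) * eg A j) = eg A j" .
  then have "TT A j * (TT A j * (eg A (Suc j) * eg A j)) = TT A j * eg A j" by simp
  then show ?thesis by (simp add: mult.assoc[symmetric] TT_inv)
qed

lemma TT_fe: "eg A j * eg A (Suc j) = eg A j * TT A j"
proof -
  have "eg A j * eg A (Suc j) * TT A j = eg A j * (eg A (Suc j) * shg B (Suc j)) * sg B j * shg A (Suc j)"
    by (simp add: TT_def mult.assoc)
  also have "\<dots> = eg A j * shg B (Suc j) * shg A (Suc j)"
    by (simp add: f3B f13)
  also have "\<dots> = eg A j" by (simp add: mult.assoc hA)
  finally have "eg A j * eg A (Suc j) * TT A j = eg A j" .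
  then have "eg A j * eg A (Suc j) * TT A j * TT A j = eg A j * TT A j" by simp
  then show ?thesis by (simp add: mult.assoc TT_inv)
qed

lemma TT_fTT: "TT A j * eg A j * TT A j = eg A (Suc j)"
proof -
  have "TT A j * eg A j * TT A j = eg A (Suc j) * (eg A j * TT A j)" by (simp add: TT_ef[symmetric] mult.assoc)
  also have "\<dots> = eg A (Suc j)" by (simp add: TT_fe[symmetric] efe mult.assoc[symmetric])
  finally show ?thesis .
qed

lemma TT_eTT: "TT A j * eg A (Suc j) * TT A j = eg A j"
proof -
  have "TT A j * eg A (Suc j) * TT A j = (TT A j * TT A j) * eg A j * (TT A j * TT A j)"
    by (simp add: TT_fTT[symmetric] mult.assoc)
  also have "\<dots> = eg A j" by (simp add: TT_inv)
  finally show ?thesis .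
qed

lemma TT_Z: "TT A j * yg A (Suc j) * TT A j = LL A j"
proof -
  have a: "sg B j * yg B (Suc (Suc j)) * sg B j = yg B (Suc (Suc j))"
    by (simp add: r2cB mult.assoc sB)
  have b: "shg B (Suc j) * yg B (Suc (Suc j)) * shg A (Suc j) = yg A (Suc j) - eg A (Suc j)"
    by (simp add: r7dB left_diff_distrib mult.assoc hA f3A)
  have c: "shg B (Suc j) * sg B j * eg B (Suc j) * sg B j * shg A (Suc j) = eg A j"
    by (simp add: flipA[symmetric] TT_eTT[symmetric] TT_def mult.assoc)
  have "TT A j * yg A (Suc j) * TT A j
      = shg B (Suc j) * sg B j * (shg A (Suc j) * yg A (Suc j) * shg B (Suc j)) * sg B j * shg A (Suc j)"
    by (simp add: TT_def mult.assoc)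
  also have "\<dots> = shg B (Suc j) * (sg B j * yg B (Suc (Suc j)) * sg B j) * shg A (Suc j)
      + shg B (Suc j) * sg B j * eg B (Suc j) * sg B j * shg A (Suc j)"
    by (simp only: conjZA) (simp add: distrib_left distrib_right mult.assoc)
  also have "\<dots> = LL A j" by (simp only: a b c) (simp add: LL_def mult.assoc)
  finally show ?thesis .
qed

lemma TT_Zpow: "TT A j * yp A (Suc j) k * TT A j = mpow (I A) (LL A j) k"
proof (induction k)
  case 0 then show ?case by (simp add: TT_inv)
next
  case (Suc k)
  have "TT A j * yp A (Suc j) (Suc k) * TT A j
      = TT A j * yg A (Suc j) * (TT A j * TT A j) * yp A (Suc j) k * TT A j"
    by (simp add: TT_inv mult.assoc)
  also have "\<dots> = (TT A j * yg A (Suc j) * TT A j) * (TT A j * yp A (Suc j) k * TT A j)"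
    by (simp add: mult.assoc)
  also have "\<dots> = mpow (I A) (LL A j) (Suc k)" by (simp add: Suc TT_Z)
  finally show ?case .
qed

lemma bub_c2: "eg A (Suc j) * yp A (Suc j) k * eg A (Suc j)
   = eg A (Suc j) * eg A j * mpow (I A) (LL A j) k * eg A j * eg A (Suc j)"
proof -
  have "eg A (Suc j) * yp A (Suc j) k * eg A (Suc j)
      = (eg A (Suc j) * eg A j * eg A (Suc j)) * yp A (Suc j) k * (eg A (Suc j) * eg A j * eg A (Suc j))"
    by (simp only: efe)
  also have "\<dots> = eg A (Suc j) * (eg A j * eg A (Suc j)) * yp A (Suc j) k * (eg A (Suc j) * eg A j) * eg A (Suc j)"
    by (simp only: mult.assoc)
  also have "\<dots> = eg A (Suc j) * (eg A j * TT A j) * yp A (Suc j) k * (TT A j * eg A j) * eg A (Suc j)"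
    by (simp only: TT_ef TT_fe)
  also have "\<dots> = eg A (Suc j) * eg A j * (TT A j * yp A (Suc j) k * TT A j) * eg A j * eg A (Suc j)"
    by (simp only: mult.assoc)
  also have "\<dots> = eg A (Suc j) * eg A j * mpow (I A) (LL A j) k * eg A j * eg A (Suc j)"
    by (simp only: TT_Zpow)
  finally show ?thesis .
qed

lemma fZ: "eg A j * yg A (Suc j) = - (eg A j * yg A j)"
  using rel8a[OF cf] by simp
lemma Zf: "yg A (Suc j) * eg A j = - (yg A j * eg A j)"
  using rel8b[OF cf] by simp
lemma eZ: "eg A (Suc j) * yg A (Suc j) = - (eg A (Suc j) * yg A (Suc (Suc j)))"
  using rel8a[OF cA] by simp
lemma eW: "eg A (Suc j) * yg A (Suc (Suc j)) = - (eg A (Suc j) * yg A (Suc j))"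
  using eZ by (simp add: minus_equation_iff)
lemma eY: "eg A (Suc j) * yp A j m = yp A j m * eg A (Suc j)"
  by (rule y_comm_e) (use A in auto)
lemma eY1: "eg A (Suc j) * yg A j = yg A j * eg A (Suc j)"
  by (rule r5c) (use A in auto)
lemma fW: "eg A j * yp A (Suc (Suc j)) m = yp A (Suc (Suc j)) m * eg A j"
  by (rule y_comm_e) (use A in auto)
lemma fW1: "eg A j * yg A (Suc (Suc j)) = yg A (Suc (Suc j)) * eg A j"
  by (rule r5c) (use A in auto)

lemma eZm: "eg A (Suc j) * yp A (Suc j) m = csm ((-1) ^ m) (eg A (Suc j) * yp A (Suc (Suc j)) m)"
  by (rule sign_powL[OF eZ A(1)])

lemma efW: "eg A (Suc j) * eg A j * yg A (Suc (Suc j)) = yg A j * (eg A (Suc j) * eg A j)"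
proof -
  have "eg A (Suc j) * eg A j * yg A (Suc (Suc j)) = (eg A (Suc j) * yg A (Suc (Suc j))) * eg A j"
    by (simp add: mult.assoc fW1)
  also have "\<dots> = - (eg A (Suc j) * (yg A (Suc j) * eg A j))"
    by (simp add: eW mult.assoc[symmetric])
  also have "\<dots> = yg A j * (eg A (Suc j) * eg A j)"
    by (simp add: Zf mult.assoc[symmetric] eY1)
  finally show ?thesis .
qed

lemma efWm: "eg A (Suc j) * eg A j * yp A (Suc (Suc j)) m = yp A j m * (eg A (Suc j) * eg A j)"
  by (rule comm_pow) (simp_all add: efW mult.assoc[symmetric])

lemma eZf: "eg A (Suc j) * yp A (Suc j) m * eg A j = csm ((-1) ^ m) (yp A j m * (eg A (Suc j) * eg A j))"
proof -
  have "eg A (Suc j) * yp A (Suc j) m * eg A j = csm ((-1) ^ m) (eg A (Suc j) * (yp A (Suc (Suc j)) m * eg A j))"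
    by (simp add: eZm csm_multL mult.assoc)
  also have "\<dots> = csm ((-1) ^ m) (yp A j m * (eg A (Suc j) * eg A j))"
    by (simp add: fW[symmetric] mult.assoc[symmetric] efWm)
  finally show ?thesis .
qed

lemma LLdist: "X * LL A j = X * yg A (Suc j) - X * eg A (Suc j) + X * eg A j"
  by (simp add: LL_def distrib_left right_diff_distrib)

lemma T1:
  "eg A (Suc j) * eg A j * yp A j m * LL A j
   = - (eg A (Suc j) * eg A j * yp A j (Suc m)) - yp A j m * eg A (Suc j)
     + eg A (Suc j) * (eg A j * yp A j m * eg A j)"
proof -
  have a: "eg A (Suc j) * eg A j * yp A j m * yg A (Suc j) = - (eg A (Suc j) * eg A j * yp A j (Suc m))"
  proof -
    have "eg A (Suc j) * eg A j * yp A j m * yg A (Suc j) = eg A (Suc j) * (eg A j * yg A (Suc j)) * yp A j m"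
      by (simp only: mult.assoc y_comm_pow[OF A(1), symmetric])
    also have "\<dots> = - (eg A (Suc j) * eg A j * (yg A j * yp A j m))" by (simp add: fZ mult.assoc)
    also have "\<dots> = - (eg A (Suc j) * eg A j * yp A j (Suc m))" by (simp only: ypS)
    finally show ?thesis .
  qed
  have b: "eg A (Suc j) * eg A j * yp A j m * eg A (Suc j) = yp A j m * eg A (Suc j)"
  proof -
    have "eg A (Suc j) * eg A j * yp A j m * eg A (Suc j) = (eg A (Suc j) * eg A j * eg A (Suc j)) * yp A j m"
      by (simp only: mult.assoc eY)
    also have "\<dots> = yp A j m * eg A (Suc j)" by (simp only: efe eY)
    finally show ?thesis .
  qed
  have c: "eg A (Suc j) * eg A j * yp A j m * eg A j = eg A (Suc j) * (eg A j * yp A j m * eg A j)"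
    by (simp only: mult.assoc)
  show ?thesis
    by (simp only: LLdist a b c)
qed

lemma T3:
  "eg A (Suc j) * yp A (Suc j) m * LL A j
   = eg A (Suc j) * yp A (Suc j) (Suc m) - eg A (Suc j) * yp A (Suc j) m * eg A (Suc j)
     + csm ((-1) ^ m) (yp A j m * (eg A (Suc j) * eg A j))"
proof -
  have a: "eg A (Suc j) * yp A (Suc j) m * yg A (Suc j) = eg A (Suc j) * yp A (Suc j) (Suc m)"
    by (simp only: mult.assoc ypS')
  show ?thesis by (simp only: LLdist a eZf)
qed

lemma B3: "eg A (Suc j) * yp A (Suc j) m * eg A j * eg A (Suc j) = csm ((-1) ^ m) (yp A j m * eg A (Suc j))"
proof -
  have "eg A (Suc j) * yp A (Suc j) m * eg A j * eg A (Suc j) = csm ((-1) ^ m) (yp A j m * (eg A (Suc j) * eg A j)) * eg A (Suc j)"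
    by (simp only: eZf)
  also have "\<dots> = csm ((-1) ^ m) (yp A j m * (eg A (Suc j) * eg A j * eg A (Suc j)))"
    by (simp only: csm_multL mult.assoc)
  also have "\<dots> = csm ((-1) ^ m) (yp A j m * eg A (Suc j))" by (simp only: efe)
  finally show ?thesis .
qed

end
end

context vb begin

lemma Sp_c2:
  assumes As: "A \<in> Sp (Suc j) p" and p: "length p = Suc j" "1 \<le> j" "p ! (j - 1) \<noteq> p ! j"
  shows "A \<in> S" "1 \<le> j" "Suc j < N" "A ! (j - 1) \<noteq> A ! j" "A ! j \<noteq> A ! Suc j"
    "A \<in> Sp j (take j p)"
proof -
  note a = SpD[OF As]
  have n1: "A ! (j - 1) = p ! (j - 1)" "A ! j = p ! j"
    using nth_take[of "j - 1" "Suc j" A] nth_take[of j "Suc j" A] a(2) by auto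
  show "A \<in> S" "1 \<le> j" "Suc j < N" "A ! (j - 1) \<noteq> A ! j" "A ! j \<noteq> A ! Suc j"
    using a p n1 by auto
  show "A \<in> Sp j (take j p)"
  proof -
    have "take j A = take j p" using a(2) by (auto simp: min_def)
    then show ?thesis using a p n1 by (auto simp: Sp_def)
  qed
qed

lemma idR2[simp]: "eg X i * (I X * a) = eg X i * a" "yp X i k * (I X * a) = yp X i k * a"
  by (simp_all add: mult.assoc[symmetric])

lemma c2_main:
  assumes p: "length p = Suc j" "1 \<le> j" "p ! (j - 1) \<noteq> p ! j"
    and IHf: "\<And>m. good j (take j p) m"
    and IHe: "\<And>m. m < k \<Longrightarrow> good (Suc j) p m"
  shows "good (Suc j) p k"
proof -
  define M where "M = (\<lambda>n A. mpow (I A) (LL A j) n)"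
  define F1 where "F1 = (\<lambda>n m A. eg A (Suc j) * eg A j * yp A j m * M n A * eg A j * eg A (Suc j))"
  define F3 where "F3 = (\<lambda>n m A. eg A (Suc j) * yp A (Suc j) m * M n A * eg A j * eg A (Suc j))"
  let ?e = "\<lambda>A. eg A (Suc j)"
  have Qex: "\<exists>Q. pok (Suc j) Q \<and> (\<forall>A \<in> Sp (Suc j) p. eg A j * yp A j m * eg A j = pv A Q * eg A j)" for m
  proof -
    obtain Q where Q: "pok j Q" "\<And>A. A \<in> Sp j (take j p) \<Longrightarrow> eg A j * yp A j m * eg A j = pv A Q * eg A j"
      using IHf[of m] unfolding good_def unif_def by blast
    show ?thesis
      by (rule exI[of _ Q]) (use Q Sp_c2(6)[OF _ p] pok_mono[OF Q(1)] in auto)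
  qed
  have eQ: "eg A (Suc j) * (pv A Q * X) = pv A Q * (eg A (Suc j) * X)"
    if "A \<in> Sp (Suc j) p" "pok (Suc j) Q" for A Q X
  proof -
    note c = Sp_c2[OF that(1) p]
    have "eg A (Suc j) * pv A Q = pv A Q * eg A (Suc j)"
      by (rule e_comm_pv) (use c that(2) in auto)
    then show ?thesis by (simp add: mult.assoc[symmetric])
  qed
  have claim: "\<forall>m. (m + n \<le> k \<longrightarrow> unif (Suc j) p (F1 n m) ?e) \<and> (m + n < k \<longrightarrow> unif (Suc j) p (F3 n m) ?e)" for n
  proof (induction n)
    case 0
    show ?case
    proof (intro allI conjI impI)
      fix m
      obtain Q where Q: "pok (Suc j) Q" "\<And>A. A \<in> Sp (Suc j) p \<Longrightarrow> eg A j * yp A j m * eg A j = pv A Q * eg A j"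
        using Qex[of m] by blast
      show "unif (Suc j) p (F1 0 m) ?e"
      proof (rule unif_intro[OF Q(1)])
        fix A assume As: "A \<in> Sp (Suc j) p"
        note c = Sp_c2[OF As p]
        have "F1 0 m A = eg A (Suc j) * (eg A j * yp A j m * eg A j) * eg A (Suc j)"
          by (simp add: F1_def M_def mult.assoc)
        also have "\<dots> = pv A Q * (eg A (Suc j) * eg A j * eg A (Suc j))"
          by (simp only: Q(2)[OF As]) (simp only: eQ[OF As Q(1)] mult.assoc)
        also have "\<dots> = pv A Q * eg A (Suc j)" by (simp only: efe[OF c(1-5)])
        finally show "F1 0 m A = pv A Q * eg A (Suc j)" .
      qed
      show "unif (Suc j) p (F3 0 m) ?e"
      proof (rule unif_intro[of _ "psc ((-1) ^ m) (mono j m)"])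
        show "pok (Suc j) (psc ((- 1) ^ m) (mono j m))" using p by (simp add: pok_mono_poly)
        fix A assume As: "A \<in> Sp (Suc j) p"
        note c = Sp_c2[OF As p]
        have "F3 0 m A = eg A (Suc j) * yp A (Suc j) m * eg A j * eg A (Suc j)"
          by (simp add: F3_def M_def mult.assoc)
        also have "\<dots> = csm ((-1) ^ m) (yp A j m * eg A (Suc j))" by (rule B3[OF c(1-5)])
        also have "\<dots> = pv A (psc ((-1) ^ m) (mono j m)) * eg A (Suc j)"
          using p by (simp add: pv_psc pv_mono csm_multL)
        finally show "F3 0 m A = pv A (psc ((-1) ^ m) (mono j m)) * eg A (Suc j)" .
      qed
    qed
  next
    case (Suc n)
    show ?case
    proof (intro allI conjI impI)
      fix m
      assume mk: "m + Suc n \<le> k"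
      obtain Q where Q: "pok (Suc j) Q" "\<And>A. A \<in> Sp (Suc j) p \<Longrightarrow> eg A j * yp A j m * eg A j = pv A Q * eg A j"
        using Qex[of m] by blast
      have u1: "unif (Suc j) p (F1 n (Suc m)) ?e" using Suc mk by auto
      have u2: "unif (Suc j) p (F3 n 0) ?e" using Suc mk by auto
      have u3: "unif (Suc j) p (F1 n 0) ?e" using Suc mk by auto
      have pm: "pok (Suc j) (mono j m)" using p by (simp add: pok_mono_poly)
      show "unif (Suc j) p (F1 (Suc n) m) ?e"
      proof (rule unif_cong[OF unif_add[OF unif_add[OF unif_csm[OF u1, of "-1"]
              unif_csm[OF unif_pv[OF pm u2], of "-1"]] unif_pv[OF Q(1) u3]]])
        fix A assume As: "A \<in> Sp (Suc j) p"
        note c = Sp_c2[OF As p]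
        have "F1 (Suc n) m A = (eg A (Suc j) * eg A j * yp A j m * LL A j) * M n A * eg A j * eg A (Suc j)"
          by (simp add: F1_def M_def mult.assoc)
        also have "\<dots> = - F1 n (Suc m) A - yp A j m * F3 n 0 A + pv A Q * F1 n 0 A"
          by (simp only: T1[OF c(1-5)] Q(2)[OF As] eQ[OF As Q(1)])
             (simp add: F1_def F3_def algebra_simps)
        also have "\<dots> = csm (-1) (F1 n (Suc m) A) + csm (-1) (pv A (mono j m) * F3 n 0 A) + pv A Q * F1 n 0 A"
          using p by (simp add: csm_m1 pv_mono)
        finally show "F1 (Suc n) m A = csm (-1) (F1 n (Suc m) A) + csm (-1) (pv A (mono j m) * F3 n 0 A) + pv A Q * F1 n 0 A" .
      qed
    next
      fix m
      assume mk: "m + Suc n < k"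
      obtain Bp where Bp: "pok (Suc j) Bp" "\<And>A. A \<in> Sp (Suc j) p \<Longrightarrow> eg A (Suc j) * yp A (Suc j) m * eg A (Suc j) = pv A Bp * eg A (Suc j)"
        using IHe[of m] mk unfolding good_def unif_def by auto
      have u1: "unif (Suc j) p (F3 n (Suc m)) ?e" using Suc mk by auto
      have u2: "unif (Suc j) p (F3 n 0) ?e" using Suc mk by auto
      have u3: "unif (Suc j) p (F1 n 0) ?e" using Suc mk by auto
      have pm: "pok (Suc j) (mono j m)" using p by (simp add: pok_mono_poly)
      show "unif (Suc j) p (F3 (Suc n) m) ?e"
      proof (rule unif_cong[OF unif_add[OF unif_add[OF u1
              unif_csm[OF unif_pv[OF Bp(1) u2], of "-1"]] unif_csm[OF unif_pv[OF pm u3], of "(-1) ^ m"]]])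
        fix A assume As: "A \<in> Sp (Suc j) p"
        note c = Sp_c2[OF As p]
        have "F3 (Suc n) m A = (eg A (Suc j) * yp A (Suc j) m * LL A j) * M n A * eg A j * eg A (Suc j)"
          by (simp add: F3_def M_def mult.assoc)
        also have "\<dots> = F3 n (Suc m) A - pv A Bp * F3 n 0 A + csm ((-1) ^ m) (yp A j m * F1 n 0 A)"
          by (simp only: T3[OF c(1-5)] Bp(2)[OF As])
             (simp add: F1_def F3_def algebra_simps csm_multL)
        also have "\<dots> = F3 n (Suc m) A + csm (-1) (pv A Bp * F3 n 0 A) + csm ((-1) ^ m) (pv A (mono j m) * F1 n 0 A)"
          using p by (simp add: csm_m1 pv_mono)
        finally show "F3 (Suc n) m A = F3 n (Suc m) A + csm (-1) (pv A Bp * F3 n 0 A) + csm ((-1) ^ m) (pv A (mono j m) * F1 n 0 A)" .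
      qed
    qed
  qed
  have u: "unif (Suc j) p (F1 k 0) ?e" using claim[of k] by auto
  show ?thesis unfolding good_def
  proof (rule unif_cong[OF u])
    fix A assume As: "A \<in> Sp (Suc j) p"
    note c = Sp_c2[OF As p]
    show "eg A (Suc j) * yp A (Suc j) k * eg A (Suc j) = F1 k 0 A"
      by (simp only: bub_c2[OF c(1-5)]) (simp add: F1_def M_def mult.assoc)
  qed
qed

end

context vb begin

lemma good_empty: "Sp i p = {} \<Longrightarrow> good i p k"
  unfolding good_def unif_def by (rule exI[of _ "[]"]) simp

lemma good_base: "good 1 [1] k"
  unfolding good_def
proof (rule unif_intro[of _ "cst (\<omega> k)"])
  show "pok 1 (cst (\<omega> k))" by (simp add: pok_cst)
  fix A assume As: "A \<in> Sp 1 [1]"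
  note a = SpD[OF As]
  have a0: "A ! 0 = 1" using a(2) by (metis nth_Cons_0 nth_take zero_less_one)
  have a1: "A ! 1 = -1" using seq_pm[OF a(1) a(4)] a a0 by auto
  have "eg A 1 * yp A 1 k * eg A 1 = csm (\<omega> k) (eg A 1)"
    by (rule rel4) (use a a0 a1 in auto)
  also have "\<dots> = pv A (cst (\<omega> k)) * eg A 1" by (simp add: pv_cst csm_multL)
  finally show "eg A 1 * yp A 1 k * eg A 1 = pv A (cst (\<omega> k)) * eg A 1" .
qed

lemma c2_all:
  assumes p: "length p = Suc j" "1 \<le> j" "p ! (j - 1) \<noteq> p ! j"
    and IHf: "\<And>m. good j (take j p) m"
  shows "good (Suc j) p k"
proof (induction k rule: less_induct)
  case (less k)
  show ?case by (rule c2_main[OF p IHf less])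
qed

lemma pm_neq: "A \<in> S \<Longrightarrow> a < N \<Longrightarrow> b < N \<Longrightarrow> A ! a \<noteq> A ! b \<Longrightarrow> A ! b = - (A ! a)"
  using seq_pm[of A r t a] seq_pm[of A r t b] by auto

lemma good_all: "1 \<le> i \<Longrightarrow> good i p k"
proof (induction i arbitrary: p k rule: nat_induct_at_least)
  case base
  show ?case
  proof (cases "Sp 1 p = {}")
    case True then show ?thesis by (rule good_empty)
  next
    case False
    then obtain A0 where A0: "A0 \<in> Sp 1 p" by blast
    note a = SpD[OF A0]
    have p: "p = [A0 ! 0]" using a(2) a(4) seq_len[OF a(1)]
      by (metis One_nat_def take_Suc_conv_app_nth take_0 append_Nil less_trans zero_less_one)
    have "0 < N" using a(4) by auto
    then have "A0 ! 0 = 1 \<or> A0 ! 0 = -1" using seq_pm[OF a(1), of 0] by blast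
    then show ?thesis
    proof
      assume "A0 ! 0 = 1" then show ?thesis using p good_base by simp
    next
      assume m: "A0 ! 0 = -1"
      show ?thesis
      proof (rule flip[of 1 p "[1]"])
        fix A assume As: "A \<in> Sp 1 p"
        note b = SpD[OF As]
        have b0: "A ! 0 = -1" using b(2) p m by (metis nth_Cons_0 nth_take zero_less_one)
        have n0: "0 < N" using b(4) by auto
        have "A ! 1 = - (A ! 0)" using pm_neq[OF b(1) n0 b(4)] b(5) by simp
        then have b1: "A ! 1 = 1" using b0 by simp
        show "swp 1 A \<in> Sp 1 [1]"
          using b b0 b1 take_swp[of 1 A] by (auto simp: Sp_def ss)
      next
        fix k show "good 1 [1] k" by (rule good_base)
      qed
    qed
  qed
next
  case (Suc j)
  show ?case
  proof (cases "Sp (Suc j) p = {}")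
    case True then show ?thesis by (rule good_empty)
  next
    case False
    then obtain A0 where A0: "A0 \<in> Sp (Suc j) p" by blast
    note a = SpD[OF A0]
    have lp: "length p = Suc j" using a(2) a(4) seq_len[OF a(1)] by auto
    have pA: "p ! (j - 1) = A0 ! (j - 1)" "p ! j = A0 ! j"
      using a(2) nth_take[of "j - 1" "Suc j" A0] nth_take[of j "Suc j" A0] by auto
    show ?thesis
    proof (cases "p ! (j - 1) = p ! j")
      case False
      show ?thesis by (rule c2_all[OF lp Suc(1) False Suc(2)])
    next
      case True
      define p' where "p' = take j p @ [- (p ! j)]"
      have "j < N" using a(4) by auto
      then have pj: "p ! j = 1 \<or> p ! j = -1" using pA seq_pm[OF a(1), of j] by auto
      have lp': "length p' = Suc j" using lp by (simp add: p'_def)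
      have p'1: "p' ! (j - 1) \<noteq> p' ! j"
        using True pj lp Suc(1) by (auto simp: p'_def nth_append)
      have tk: "take j p' = take j p" using lp by (simp add: p'_def)
      show ?thesis
      proof (rule flip[of "Suc j" p p'])
        fix A assume As: "A \<in> Sp (Suc j) p"
        note b = SpD[OF As]
        have bj: "A ! j = p ! j" using b(2) nth_take[of j "Suc j" A] by auto
        have nj: "j < N" using b(4) by auto
        have bs: "A ! Suc j = - (A ! j)" using pm_neq[OF b(1) nj b(4)] b(5) by simp
        have "take (Suc j) (swp (Suc j) A) = take j A @ [A ! Suc j]"
          using take_swp[of "Suc j" A] b seq_len[OF b(1)] by simp
        also have "\<dots> = p'"
          using b(2) bj bs by (simp add: p'_def min_def) (metis b(2) le_add2 plus_1_eq_Suc take_take min_def)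
        finally show "swp (Suc j) A \<in> Sp (Suc j) p'"
          using b by (auto simp: Sp_def ss)
      next
        fix k show "good (Suc j) p' k"
          by (rule c2_all[OF lp' Suc(1) p'1]) (simp add: tk Suc(2))
      qed
    qed
  qed
qed

end

theorem mainTheorem5:
  fixes r t :: nat and \<omega> :: "nat \<Rightarrow> complex"
  shows "\<exists>W :: int list \<Rightarrow> nat \<Rightarrow> (complex \<times> nat list) list.
     (\<forall>pre k c e. (c, e) \<in> set (W pre k) \<longrightarrow> length e < length pre) \<and>
     (\<forall>A i k. A \<in> Seq r t \<longrightarrow> 1 \<le> i \<longrightarrow> i < r + t \<longrightarrow> A ! (i - 1) \<noteq> A ! i \<longrightarrow>
        veq r t \<omega> (Comp (Eg A i) (Comp (ypow A i k) (Eg A i)))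
                  (Comp (peval A (W (take i A) k)) (Eg A i)))"
proof -
  interpret vb r t \<omega> .
  define G where "G = (\<lambda>pre k P. pok (length pre) P \<and>
      (\<forall>A \<in> Sp (length pre) pre. eg A (length pre) * yp A (length pre) k * eg A (length pre)
          = pv A P * eg A (length pre)))"
  define W where "W = (\<lambda>pre k. if \<exists>P. G pre k P then SOME P. G pre k P else [])"
  have WG: "pok (length pre) (W pre k)" for pre k
  proof (cases "\<exists>P. G pre k P")
    case True
    then have "G pre k (SOME P. G pre k P)" by (rule someI_ex)
    then have "G pre k (W pre k)" using True by (simp add: W_def)
    then show ?thesis unfolding G_def by blast
  next
    case False then have "W pre k = []" unfolding W_def by (simp only: if_False)
    then show ?thesis by simp
  qed
  show ?thesis
  proof (rule exI[of _ W], intro conjI allI impI)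
    fix pre k c e assume "(c, e) \<in> set (W pre k)"
    then show "length e < length pre" using WG[of pre k] by (auto simp: pok_def)
  next
    fix A i k
    assume A: "A \<in> Seq r t" "1 \<le> i" "i < r + t" "A ! (i - 1) \<noteq> A ! i"
    let ?pre = "take i A"
    have lpre: "length ?pre = i" using A seq_len[OF A(1)] by simp
    have As: "A \<in> Sp i ?pre" using A by (simp add: Sp_def)
    have ex: "\<exists>P. G ?pre k P"
      using good_all[OF A(2), of ?pre k] unfolding good_def unif_def G_def lpre by blast
    have "G ?pre k (W ?pre k)" using someI_ex[OF ex] ex by (simp add: W_def)
    then have "\<forall>A \<in> Sp (length ?pre) ?pre. eg A (length ?pre) * yp A (length ?pre) k * eg A (length ?pre)
          = pv A (W ?pre k) * eg A (length ?pre)" unfolding G_def by blast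
    then have "eg A i * yp A i k * eg A i = pv A (W ?pre k) * eg A i"
      using As unfolding lpre by blast
    then have "ev (Comp (Eg A i) (Comp (ypow A i k) (Eg A i))) = ev (Comp (peval A (W ?pre k)) (Eg A i))"
      by (simp add: E_comp mult.assoc)
    then show "veq r t \<omega> (Comp (Eg A i) (Comp (ypow A i k) (Eg A i)))
                  (Comp (peval A (W ?pre k)) (Eg A i))" by (simp add: E_eq)
  qed
qed

end
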